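(* The complex $\mathcal{M}(\partial\Delta^2)$ is the $1$-skeleton of a triangular prism (a graph with $6$ vertices and $9$ edges), so $\mathcal{M}(\partial\Delta^2)\simeq\bigvee^4S^1$; moreover $\mathcal{M}(\Delta^2)$ collapses simplicially onto its subcomplex $\mathcal{M}(\partial\Delta^2)$, hence $\mathcal{M}(\Delta^2)\simeq\bigvee^4S^1$.
   Context: All simplicial complexes are finite abstract simplicial complexes; simplices are nonempty. $\Delta^n$ is the simplicial complex of all nonempty subsets of an $(n+1)$-element vertex set, and $\partial\Delta^n$ the subcomplex of proper nonempty subsets. The Hasse diagram $\mathcal{H}(K)$ of $K$ is the directed graph whose vertices are the simplices of $K$, with an edge $\sigma\to\tau$ whenever $\sigma\subsetneq\tau$ and $\dim\tau=\dim\sigma+1$. A matching on $\mathcal{H}(K)$ is a set $W$ of edges of $\mathcal{H}(K)$, no two sharing a vertex; an edge in $W$ is called a pair. $W$ is acyclic if the directed graph obtained from $\mathcal{H}(K)$ by reversing every edge in $W$ has no directed cycle. The complex of discrete Morse matchings $\mathcal{M}(K)$ is the simplicial complex whose vertices are the edges of $\mathcal{H}(K)$ and whose simplices are the nonempty acyclic matchings on $\mathcal{H}(K)$; $\mathcal{M}(\partial\Delta^2)$ is regarded as a subcomplex of $\mathcal{M}(\Delta^2)$ via the map sending each pair to itself. *)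

theory Defs
  imports "HOL-Analysis.Analysis"
begin

definition simplicial_complex :: "'a set set \<Rightarrow> bool" where
  "simplicial_complex K \<longleftrightarrow> finite K \<and> (\<forall>\<sigma>\<in>K. finite \<sigma> \<and> \<sigma> \<noteq> {}) \<and>
     (\<forall>\<sigma>\<in>K. \<forall>\<tau>. \<tau> \<subseteq> \<sigma> \<and> \<tau> \<noteq> {} \<longrightarrow> \<tau> \<in> K)"

definition vertices :: "'a set set \<Rightarrow> 'a set" where
  "vertices K = \<Union>K"

definition Delta2 :: "nat set set" where
  "Delta2 = {\<sigma>. \<sigma> \<subseteq> {0,1,2} \<and> \<sigma> \<noteq> {}}"

definition bdDelta2 :: "nat set set" where
  "bdDelta2 = {\<sigma>. \<sigma> \<subset> {0,1,2} \<and> \<sigma> \<noteq> {}}"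

definition hasse :: "'a set set \<Rightarrow> ('a set \<times> 'a set) set" where
  "hasse K = {(\<sigma>, \<tau>). \<sigma> \<in> K \<and> \<tau> \<in> K \<and> \<sigma> \<subset> \<tau> \<and> card \<tau> = card \<sigma> + 1}"

definition is_matching :: "('v \<times> 'v) set \<Rightarrow> bool" where
  "is_matching W \<longleftrightarrow> (\<forall>e\<in>W. \<forall>e'\<in>W. e \<noteq> e' \<longrightarrow>
      {fst e, snd e} \<inter> {fst e', snd e'} = {})"

definition acyclic_matching :: "'a set set \<Rightarrow> ('a set \<times> 'a set) set \<Rightarrow> bool" where
  "acyclic_matching K W \<longleftrightarrow> W \<subseteq> hasse K \<and> is_matching W \<and>
      acyclic ((hasse K - W) \<union> W\<inverse>)"

definition morse_complex :: "'a set set \<Rightarrow> ('a set \<times> 'a set) set set" where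
  "morse_complex K = {W. W \<noteq> {} \<and> acyclic_matching K W}"

definition simp_iso :: "'a set set \<Rightarrow> 'b set set \<Rightarrow> bool" where
  "simp_iso K L \<longleftrightarrow> (\<exists>f. bij_betw f (vertices K) (vertices L) \<and>
      (\<forall>\<sigma>. \<sigma> \<subseteq> vertices K \<longrightarrow> (\<sigma> \<in> K \<longleftrightarrow> f ` \<sigma> \<in> L)))"

text \<open>1-skeleton of the triangular prism: vertices (i,b), i in {0,1,2}, b a bool;
  edges inside each triangle and the three vertical edges.\<close>
definition prism_graph :: "(nat \<times> bool) set set" where
  "prism_graph =
     {{(i, b)} | i b. i \<in> {0,1,2}} \<union>
     {{(i, b), (j, b)} | i j b. i \<in> {0,1,2} \<and> j \<in> {0,1,2} \<and> i \<noteq> j} \<union>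
     {{(i, False), (i, True)} | i. i \<in> {0,1,2}}"

definition elementary_collapse :: "'a set set \<Rightarrow> 'a set set \<Rightarrow> bool" where
  "elementary_collapse K K' \<longleftrightarrow> (\<exists>\<sigma> \<tau>. \<sigma> \<in> K \<and> \<tau> \<in> K \<and> \<sigma> \<subset> \<tau> \<and>
      (\<forall>\<rho>\<in>K. \<sigma> \<subseteq> \<rho> \<longrightarrow> \<rho> = \<sigma> \<or> \<rho> = \<tau>) \<and> K' = K - {\<sigma>, \<tau>})"

definition collapses_to :: "'a set set \<Rightarrow> 'a set set \<Rightarrow> bool" where
  "collapses_to K L \<longleftrightarrow> (K, L) \<in> {(A, B). elementary_collapse A B}\<^sup>*"

text \<open>Points are barycentric coordinate functions supported on a simplex;
  topology is the subspace topology of the product topology on 'a => real.\<close>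
definition realization :: "'a set set \<Rightarrow> ('a \<Rightarrow> real) topology" where
  "realization K = subtopology (powertop_real UNIV)
     {f. (\<forall>v. 0 \<le> f v) \<and> (\<exists>\<sigma>\<in>K. {v. f v \<noteq> 0} \<subseteq> \<sigma> \<and> sum f \<sigma> = 1)}"

text \<open>Wedge of n circles: circles in the plane with centres k and radii k,
  k = 1..n, pairwise meeting exactly at 0.\<close>
definition wedge_circles :: "nat \<Rightarrow> complex topology" where
  "wedge_circles n = top_of_set {z. \<exists>k\<in>{1..n}. cmod (z - of_nat k) = real k}"

end

theory Submission
  imports Defs
begin


definition rset :: "'a set set \<Rightarrow> ('a \<Rightarrow> real) set" where
  "rset K = {f. (\<forall>v. 0 \<le> f v) \<and> (\<exists>\<sigma>\<in>K. {v. f v \<noteq> 0} \<subseteq> \<sigma> \<and> sum f \<sigma> = 1)}"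

lemma realization_eq: "realization K = subtopology (powertop_real UNIV) (rset K)"
  unfolding realization_def rset_def by simp

lemma topspace_realization [simp]: "topspace (realization K) = rset K"
  unfolding realization_eq by (simp add: topspace_product_topology)

lemma rset_mono: "K' \<subseteq> K \<Longrightarrow> rset K' \<subseteq> rset K"
  unfolding rset_def by blast

lemma sum_supp_eq:
  assumes "{v. f v \<noteq> 0} \<subseteq> A" "{v. f v \<noteq> 0} \<subseteq> B" "finite A" "finite B"
  shows "sum f A = sum f B"
proof -
  have "sum f A = sum f (A \<inter> B)"
    by (rule sum.mono_neutral_right) (use assms in auto)
  also have "\<dots> = sum f B"
    by (rule sum.mono_neutral_left) (use assms in auto)
  finally show ?thesis .
qed

lemma sum_one_finite: "sum f A = (1::real) \<Longrightarrow> finite A"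
  by (metis sum.infinite zero_neq_one)

lemma cont_proj_real: "continuous_map X (powertop_real UNIV) f \<Longrightarrow> continuous_map X euclideanreal (\<lambda>x. f x v)"
  by (simp add: continuous_map_componentwise_UNIV)

lemma cont_Min:
  assumes "finite A" "A \<noteq> {}" "\<And>v. v \<in> A \<Longrightarrow> continuous_map X euclideanreal (f v)"
  shows "continuous_map X euclideanreal (\<lambda>x. Min ((\<lambda>v. f v x) ` A))"
  using assms
proof (induction A rule: finite_ne_induct)
  case (singleton a) then show ?case by simp
next
  case (insert a A)
  have "(\<lambda>x. Min ((\<lambda>v. f v x) ` insert a A)) = (\<lambda>x. min (f a x) (Min ((\<lambda>v. f v x) ` A)))"
    using insert by (auto simp: Min_insert)
  then show ?case using insert by (auto intro!: continuous_map_real_min)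
qed

definition good_step :: "'a set set \<Rightarrow> 'a set set \<Rightarrow> 'a set \<Rightarrow> 'a set \<Rightarrow> 'a \<Rightarrow> bool" where
  "good_step K K' \<sigma> \<tau> c \<longleftrightarrow> K' = K - {\<sigma>, \<tau>} \<and> \<sigma> \<in> K \<and> \<tau> \<in> K \<and> finite \<sigma> \<and> \<sigma> \<noteq> {} \<and> c \<notin> \<sigma>
     \<and> \<tau> = insert c \<sigma> \<and> (\<forall>\<rho>\<in>K. \<sigma> \<subseteq> \<rho> \<longrightarrow> \<rho> \<subseteq> \<tau>) \<and> (\<forall>v\<in>\<sigma>. \<tau> - {v} \<in> K)"

lemma good_step_elementary: "good_step K K' \<sigma> \<tau> c \<Longrightarrow> elementary_collapse K K'"
  unfolding good_step_def elementary_collapse_def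
  apply (rule exI[of _ \<sigma>], rule exI[of _ \<tau>])
  by auto

lemma good_step_hequiv:
  assumes gs: "good_step K K' \<sigma> \<tau> c"
  shows "realization K homotopy_equivalent_space realization K'"
proof -
  from gs have K': "K' = K - {\<sigma>, \<tau>}" and sK: "\<sigma> \<in> K" and tK: "\<tau> \<in> K" and fs: "finite \<sigma>"
    and sne: "\<sigma> \<noteq> {}" and cs: "c \<notin> \<sigma>" and tau: "\<tau> = insert c \<sigma>"
    and free: "\<And>\<rho>. \<rho> \<in> K \<Longrightarrow> \<sigma> \<subseteq> \<rho> \<Longrightarrow> \<rho> \<subseteq> \<tau>"
    and faces: "\<And>v. v \<in> \<sigma> \<Longrightarrow> \<tau> - {v} \<in> K"
    unfolding good_step_def by blast+
  have ft: "finite \<tau>" using tau fs by simp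
  define m where "m x = Min ((\<lambda>v. x v) ` \<sigma>)" for x :: "'a \<Rightarrow> real"
  define r where "r x = (\<lambda>v. if v \<in> \<sigma> then x v - m x else if v = c then x c + real (card \<sigma>) * m x else x v)"
    for x :: "'a \<Rightarrow> real"
  let ?S = "rset K" and ?S' = "rset K'"
  have SS': "?S' \<subseteq> ?S" using K' by (intro rset_mono) auto
  have mle: "m x \<le> x v" if "v \<in> \<sigma>" for x v
    unfolding m_def using fs that by (auto intro: Min_le)
  have mex: "\<exists>v0\<in>\<sigma>. x v0 = m x" for x
  proof -
    have "Min ((\<lambda>v. x v) ` \<sigma>) \<in> (\<lambda>v. x v) ` \<sigma>" by (rule Min_in) (use fs sne in auto)
    then show ?thesis unfolding m_def by force
  qed
  have mge: "m x \<ge> 0" if "x \<in> ?S" for x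
    using mex[of x] that unfolding rset_def by (metis (mono_tags, lifting) mem_Collect_eq)
  have R1: "x \<in> ?S'" if xS: "x \<in> ?S" and m0: "m x = 0" for x
  proof -
    from xS obtain \<rho> where nn: "\<forall>v. 0 \<le> x v" and \<rho>: "\<rho> \<in> K" "{v. x v \<noteq> 0} \<subseteq> \<rho>" "sum x \<rho> = 1"
      unfolding rset_def by blast
    have fr: "finite \<rho>" using \<rho>(3) by (rule sum_one_finite)
    show ?thesis
    proof (cases "\<rho> \<in> {\<sigma>, \<tau>}")
      case False
      then show ?thesis using nn \<rho> K' unfolding rset_def by blast
    next
      case True
      then have \<rho>t: "\<rho> \<subseteq> \<tau>" using tau by auto
      obtain v0 where v0: "v0 \<in> \<sigma>" "x v0 = 0" using mex[of x] m0 by auto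
      have sub: "{v. x v \<noteq> 0} \<subseteq> \<tau> - {v0}" using \<rho>(2) \<rho>t v0 by auto
      have "sum x (\<tau> - {v0}) = sum x \<rho>"
        by (rule sum_supp_eq[OF sub \<rho>(2)]) (use ft fr in auto)
      moreover have "\<tau> - {v0} \<in> K'"
        using faces[OF v0(1)] K' tau cs v0(1) by auto
      ultimately show ?thesis using nn sub \<rho>(3) unfolding rset_def by auto
    qed
  qed
  have R2: "{v. x v \<noteq> 0} \<subseteq> \<tau> \<and> sum x \<tau> = 1" if xS: "x \<in> ?S" and mp: "m x > 0" for x
  proof -
    from xS obtain \<rho> where nn: "\<forall>v. 0 \<le> x v" and \<rho>: "\<rho> \<in> K" "{v. x v \<noteq> 0} \<subseteq> \<rho>" "sum x \<rho> = 1"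
      unfolding rset_def by blast
    have fr: "finite \<rho>" using \<rho>(3) by (rule sum_one_finite)
    have "\<sigma> \<subseteq> {v. x v \<noteq> 0}" using mle[of _ x] mp by force
    then have "\<rho> \<subseteq> \<tau>" using free[OF \<rho>(1)] \<rho>(2) by blast
    then have sub: "{v. x v \<noteq> 0} \<subseteq> \<tau>" using \<rho>(2) by blast
    have "sum x \<tau> = sum x \<rho>" by (rule sum_supp_eq[OF sub \<rho>(2) ft fr])
    with sub \<rho>(3) show ?thesis by simp
  qed
  have rid: "r x = x" if "m x = 0" for x
    unfolding r_def using that by (auto simp: fun_eq_iff)
  have sumr: "sum (r x) \<tau> = sum x \<tau>" for x
  proof -
    have "sum (r x) \<tau> = sum (r x) \<sigma> + r x c" using tau cs fs by (simp add: add.commute)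
    also have "sum (r x) \<sigma> = sum (\<lambda>v. x v - m x) \<sigma>" by (rule sum.cong) (auto simp: r_def)
    also have "\<dots> = sum x \<sigma> - real (card \<sigma>) * m x" by (simp add: sum_subtractf)
    also have "r x c = x c + real (card \<sigma>) * m x" using cs by (simp add: r_def)
    finally show ?thesis using tau cs fs by (simp add: add.commute)
  qed
  have rnn: "0 \<le> r x v" if "x \<in> ?S" for x v
    using that mle[of v x] mge[OF that] unfolding r_def rset_def by auto
  have R3: "r x \<in> ?S'" if xS: "x \<in> ?S" for x
  proof (cases "m x = 0")
    case True then show ?thesis using R1 xS rid by simp
  next
    case False
    then have mp: "m x > 0" using mge[OF xS] by simp
    from R2[OF xS mp] have sub: "{v. x v \<noteq> 0} \<subseteq> \<tau>" and s1: "sum x \<tau> = 1" by auto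
    obtain v0 where v0: "v0 \<in> \<sigma>" "x v0 = m x" using mex by blast
    have rv0: "r x v0 = 0" using v0 by (simp add: r_def)
    have subr: "{v. r x v \<noteq> 0} \<subseteq> \<tau> - {v0}"
    proof
      fix v assume "v \<in> {v. r x v \<noteq> 0}"
      then have "r x v \<noteq> 0" by simp
      then show "v \<in> \<tau> - {v0}" using rv0 sub tau unfolding r_def by (auto split: if_splits)
    qed
    have "sum (r x) (\<tau> - {v0}) = sum (r x) \<tau>"
      using rv0 ft v0 tau by (simp add: sum_diff1)
    also have "\<dots> = 1" using sumr s1 by simp
    finally have "sum (r x) (\<tau> - {v0}) = 1" .
    moreover have "\<tau> - {v0} \<in> K'"
      using faces[OF v0(1)] K' tau cs v0(1) by auto
    ultimately show ?thesis using rnn[OF xS] subr unfolding rset_def by blast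
  qed
  have R4: "r x = x" if xS': "x \<in> ?S'" for x
  proof -
    have xS: "x \<in> ?S" using SS' xS' by blast
    from xS' obtain \<rho> where \<rho>: "\<rho> \<in> K'" "{v. x v \<noteq> 0} \<subseteq> \<rho>"
      unfolding rset_def by blast
    have "m x = 0"
    proof (rule ccontr)
      assume "m x \<noteq> 0"
      then have mp: "m x > 0" using mge[OF xS] by simp
      have "\<sigma> \<subseteq> {v. x v \<noteq> 0}" using mle[of _ x] mp by force
      then have s\<rho>: "\<sigma> \<subseteq> \<rho>" using \<rho>(2) by blast
      have "\<rho> \<in> K" "\<rho> \<noteq> \<sigma>" "\<rho> \<noteq> \<tau>" using \<rho>(1) K' by auto
      then have "\<rho> \<subseteq> \<tau>" using free s\<rho> by blast
      then have "\<rho> = \<sigma> \<or> \<rho> = \<tau>" using s\<rho> tau by blast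
      with \<open>\<rho> \<noteq> \<sigma>\<close> \<open>\<rho> \<noteq> \<tau>\<close> show False by blast
    qed
    then show ?thesis by (rule rid)
  qed
  define h where "h = (\<lambda>(t::real, x). (\<lambda>v. (1 - t) * x v + t * r x v))"
  have hS: "h (t, x) \<in> ?S" if "t \<in> {0..1}" "x \<in> ?S" for t x
  proof (cases "m x = 0")
    case True then show ?thesis using that rid by (simp add: h_def algebra_simps)
  next
    case False
    then have mp: "m x > 0" using mge[OF that(2)] by simp
    from R2[OF that(2) mp] have sub: "{v. x v \<noteq> 0} \<subseteq> \<tau>" and s1: "sum x \<tau> = 1" by auto
    have subr: "{v. r x v \<noteq> 0} \<subseteq> \<tau>"
      using sub tau unfolding r_def by (auto split: if_splits)
    have nn: "0 \<le> h (t, x) v" for v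
      using that rnn[OF that(2), of v] unfolding h_def rset_def by auto
    have "{v. h (t, x) v \<noteq> 0} \<subseteq> \<tau>"
    proof
      fix v assume v: "v \<in> {v. h (t, x) v \<noteq> 0}"
      show "v \<in> \<tau>"
      proof (rule ccontr)
        assume "v \<notin> \<tau>"
        then have "x v = 0" "r x v = 0" using sub subr by auto
        then show False using v by (simp add: h_def)
      qed
    qed
    moreover have "sum (h (t, x)) \<tau> = 1"
    proof -
      have "sum (h (t, x)) \<tau> = (1 - t) * sum x \<tau> + t * sum (r x) \<tau>"
        by (simp add: h_def sum.distrib sum_distrib_left)
      then show ?thesis using sumr[of x] s1 by simp
    qed
    ultimately show ?thesis using nn tK unfolding rset_def by blast
  qed
  have Pr: "continuous_map (realization K) euclideanreal (\<lambda>x. x v)" for v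
    unfolding realization_eq
    by (rule continuous_map_from_subtopology) (use continuous_map_product_projection[of v UNIV "\<lambda>_. euclideanreal"] in simp)
  have cm: "continuous_map (realization K) euclideanreal m"
    unfolding m_def by (rule cont_Min[OF fs sne Pr])
  have cr: "continuous_map (realization K) euclideanreal (\<lambda>x. r x v)" for v
    unfolding r_def by (cases "v \<in> \<sigma>"; cases "v = c") (auto intro!: continuous_intros Pr cm)
  have cont_r: "continuous_map (realization K) (realization K') r"
    unfolding realization_eq[of K']
    apply (rule continuous_map_into_subtopology)
     apply (simp add: continuous_map_componentwise_UNIV cr)
    using R3 by auto
  have cont_h: "continuous_map (prod_topology (top_of_set {0..1}) (realization K)) (realization K) h"
  proof -
    have "continuous_map (prod_topology (top_of_set {0..1}) (realization K)) euclideanreal (\<lambda>p. h p v)" for v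
    proof -
      have e: "(\<lambda>p. h p v) = (\<lambda>p. (1 - fst p) * (snd p) v + fst p * r (snd p) v)"
        by (auto simp: h_def)
      have c1: "continuous_map (prod_topology (top_of_set {0..1}) (realization K)) euclideanreal fst"
        using continuous_map_fst continuous_map_from_subtopology continuous_map_into_fulltopology
        by (metis continuous_map_subtopology_eu subtopology_topspace)
      show ?thesis unfolding e
        by (intro continuous_intros c1 continuous_map_compose[OF continuous_map_snd Pr, unfolded o_def]
            continuous_map_compose[OF continuous_map_snd cr, unfolded o_def])
    qed
    then show ?thesis
      unfolding realization_eq[of K]
      apply (intro continuous_map_into_subtopology)
       apply (simp add: continuous_map_componentwise_UNIV flip: realization_eq)
      using hS by auto
  qed
  have hom: "homotopic_with (\<lambda>x. True) (realization K) (realization K) id r"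
    unfolding homotopic_with_def
    apply (rule exI[of _ h])
    apply (intro conjI cont_h)
    by (auto simp: h_def rid[of x] rid R3)
  have ret: "retraction_maps (realization K) (realization K') r id"
    unfolding retraction_maps_def
  proof (intro conjI cont_r ballI)
    show "continuous_map (realization K') (realization K) id"
      unfolding realization_eq using SS'
      by (auto simp: continuous_map_from_subtopology continuous_map_in_subtopology)
    show "r (id x) = x" if "x \<in> topspace (realization K')" for x using R4 that by simp
  qed
  show ?thesis
    by (rule deformation_retract_imp_homotopy_equivalent_space[OF homotopic_with_symD[OF hom] ret])
qed


lemma cont_coord: "continuous_map (realization K) euclideanreal (\<lambda>x. x v)"
  unfolding realization_eq
  by (rule continuous_map_from_subtopology) (use continuous_map_product_projection[of v UNIV "\<lambda>_. euclideanreal"] in simp)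

lemma relabel_homeo:
  fixes g :: "'a \<Rightarrow> 'b" and K :: "'a set set"
  assumes inj: "inj_on g V" and KV: "\<Union>K \<subseteq> V"
  shows "realization ((`) g ` K) homeomorphic_space realization K"
proof -
  define \<phi> where "\<phi> y = (\<lambda>v. if v \<in> V then y (g v) else 0)" for y :: "'b \<Rightarrow> real"
  define \<psi> where "\<psi> x = (\<lambda>w. if w \<in> g ` V then x (inv_into V g w) else 0)" for x :: "'a \<Rightarrow> real"
  have iv: "inv_into V g (g v) = v" if "v \<in> V" for v using inj that by simp
  have a: "\<phi> y \<in> rset K" if y: "y \<in> rset ((`) g ` K)" for y
  proof -
    from y obtain \<sigma> where nn: "\<forall>w. 0 \<le> y w" and \<sigma>: "\<sigma> \<in> K" "{w. y w \<noteq> 0} \<subseteq> g ` \<sigma>" "sum y (g ` \<sigma>) = 1"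
      unfolding rset_def by blast
    have sV: "\<sigma> \<subseteq> V" using \<sigma>(1) KV by blast
    have supp: "{v. \<phi> y v \<noteq> 0} \<subseteq> \<sigma>"
    proof
      fix v assume "v \<in> {v. \<phi> y v \<noteq> 0}"
      then have vV: "v \<in> V" and "y (g v) \<noteq> 0" by (auto simp: \<phi>_def split: if_splits)
      then have "g v \<in> g ` \<sigma>" using \<sigma>(2) by blast
      then show "v \<in> \<sigma>" using inj vV sV by (auto dest: inj_onD)
    qed
    have "sum (\<phi> y) \<sigma> = sum (y \<circ> g) \<sigma>" by (rule sum.cong) (use sV in \<open>auto simp: \<phi>_def\<close>)
    also have "\<dots> = sum y (g ` \<sigma>)" by (rule sum.reindex[symmetric]) (use inj sV in \<open>rule inj_on_subset\<close>)
    finally have "sum (\<phi> y) \<sigma> = 1" using \<sigma>(3) by simp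
    moreover have "\<forall>v. 0 \<le> \<phi> y v" using nn by (simp add: \<phi>_def)
    ultimately show ?thesis using supp \<sigma>(1) unfolding rset_def by blast
  qed
  have b: "\<psi> x \<in> rset ((`) g ` K)" if x: "x \<in> rset K" for x
  proof -
    from x obtain \<sigma> where nn: "\<forall>w. 0 \<le> x w" and \<sigma>: "\<sigma> \<in> K" "{w. x w \<noteq> 0} \<subseteq> \<sigma>" "sum x \<sigma> = 1"
      unfolding rset_def by blast
    have sV: "\<sigma> \<subseteq> V" using \<sigma>(1) KV by blast
    have supp: "{w. \<psi> x w \<noteq> 0} \<subseteq> g ` \<sigma>"
    proof
      fix w assume "w \<in> {w. \<psi> x w \<noteq> 0}"
      then obtain v where "v \<in> V" "w = g v" "x v \<noteq> 0" by (auto simp: \<psi>_def iv split: if_splits)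
      then show "w \<in> g ` \<sigma>" using \<sigma>(2) by blast
    qed
    have "sum (\<psi> x) (g ` \<sigma>) = sum (\<psi> x \<circ> g) \<sigma>" by (rule sum.reindex) (use inj sV in \<open>rule inj_on_subset\<close>)
    also have "\<dots> = sum x \<sigma>"
    proof (rule sum.cong)
      fix v assume "v \<in> \<sigma>"
      then have vV: "v \<in> V" using sV by blast
      have gv: "g v \<in> g ` V" using vV by blast
      show "(\<psi> x \<circ> g) v = x v" unfolding \<psi>_def o_def using gv iv[OF vV] by simp
    qed simp
    finally have "sum (\<psi> x) (g ` \<sigma>) = 1" using \<sigma>(3) by simp
    moreover have "0 \<le> \<psi> x w" for w using nn by (simp add: \<psi>_def)
    ultimately show ?thesis using supp \<sigma>(1) unfolding rset_def by blast
  qed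
  have c: "\<psi> (\<phi> y) = y" if y: "y \<in> rset ((`) g ` K)" for y
  proof
    fix w
    from y obtain \<sigma> where \<sigma>: "\<sigma> \<in> K" "{w. y w \<noteq> 0} \<subseteq> g ` \<sigma>"
      unfolding rset_def by blast
    have sV: "\<sigma> \<subseteq> V" using \<sigma>(1) KV by blast
    show "\<psi> (\<phi> y) w = y w"
    proof (cases "w \<in> g ` V")
      case True
      then obtain v where "v \<in> V" "w = g v" by blast
      then show ?thesis by (simp add: \<psi>_def \<phi>_def iv)
    next
      case False
      then have "y w = 0" using \<sigma>(2) sV by blast
      then show ?thesis using False by (simp add: \<psi>_def)
    qed
  qed
  have d: "\<phi> (\<psi> x) = x" if x: "x \<in> rset K" for x
  proof
    fix v
    from x obtain \<sigma> where \<sigma>: "\<sigma> \<in> K" "{w. x w \<noteq> 0} \<subseteq> \<sigma>"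
      unfolding rset_def by blast
    have sV: "\<sigma> \<subseteq> V" using \<sigma>(1) KV by blast
    show "\<phi> (\<psi> x) v = x v"
    proof (cases "v \<in> V")
      case True then show ?thesis by (simp add: \<psi>_def \<phi>_def iv)
    next
      case False
      then have "x v = 0" using \<sigma>(2) sV by blast
      then show ?thesis using False by (simp add: \<phi>_def)
    qed
  qed
  have c\<phi>: "continuous_map (realization ((`) g ` K)) (realization K) \<phi>"
    unfolding realization_eq[of K]
    apply (rule continuous_map_into_subtopology)
     apply (simp add: continuous_map_componentwise_UNIV)
    using a by (auto simp: \<phi>_def cont_coord)
  have c\<psi>: "continuous_map (realization K) (realization ((`) g ` K)) \<psi>"
    unfolding realization_eq[of "(`) g ` K"]
    apply (rule continuous_map_into_subtopology)
     apply (simp add: continuous_map_componentwise_UNIV)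
    using b by (auto simp: \<psi>_def cont_coord)
  have "homeomorphic_maps (realization ((`) g ` K)) (realization K) \<phi> \<psi>"
    unfolding homeomorphic_maps_def using c\<phi> c\<psi> c d by auto
  then show ?thesis unfolding homeomorphic_space_def by blast
qed

lemma img_mem_iff:
  assumes "inj_on g U" "A \<subseteq> U" "\<forall>\<sigma>\<in>K. \<sigma> \<subseteq> U"
  shows "g ` A \<in> (`) g ` K \<longleftrightarrow> A \<in> K"
proof
  assume "g ` A \<in> (`) g ` K"
  then obtain \<sigma> where "\<sigma> \<in> K" "g ` A = g ` \<sigma>" by blast
  then have "A = \<sigma>" using assms inj_on_image_eq_iff by metis
  then show "A \<in> K" using \<open>\<sigma> \<in> K\<close> by simp
qed auto

lemma simp_iso_relabel:
  assumes g: "inj_on g (\<Union>K)" and p: "inj_on p (\<Union>K)"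
  shows "simp_iso ((`) g ` K) ((`) p ` K)"
proof -
  let ?U = "\<Union>K"
  define f where "f = p \<circ> inv_into ?U g"
  have vg: "vertices ((`) g ` K) = g ` ?U" and vp: "vertices ((`) p ` K) = p ` ?U"
    unfolding vertices_def by auto
  have bij: "bij_betw f (g ` ?U) (p ` ?U)"
    unfolding f_def
    by (rule bij_betw_trans[OF bij_betw_inv_into[OF inj_on_imp_bij_betw[OF g]] inj_on_imp_bij_betw[OF p]])
  have "(\<sigma> \<in> (`) g ` K) = (f ` \<sigma> \<in> (`) p ` K)" if s: "\<sigma> \<subseteq> g ` ?U" for \<sigma>
  proof -
    define \<sigma>0 where "\<sigma>0 = inv_into ?U g ` \<sigma>"
    have s0: "\<sigma>0 \<subseteq> ?U" using s unfolding \<sigma>0_def by (auto intro: inv_into_into)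
    have e1: "\<sigma> = g ` \<sigma>0" unfolding \<sigma>0_def using image_inv_into_cancel[OF refl s] by simp
    have e2: "f ` \<sigma> = p ` \<sigma>0" unfolding f_def \<sigma>0_def by (simp add: image_comp)
    have KU: "\<forall>\<sigma>\<in>K. \<sigma> \<subseteq> ?U" by blast
    have 1: "g ` \<sigma>0 \<in> (`) g ` K \<longleftrightarrow> \<sigma>0 \<in> K" by (rule img_mem_iff[OF g s0 KU])
    have 2: "p ` \<sigma>0 \<in> (`) p ` K \<longleftrightarrow> \<sigma>0 \<in> K" by (rule img_mem_iff[OF p s0 KU])
    show ?thesis using 1 2 e1 e2 by simp
  qed
  then show ?thesis unfolding simp_iso_def vg vp using bij by blast
qed

lemma elem_collapse_relabel:
  assumes ec: "elementary_collapse K K'" and g: "inj_on g (\<Union>K)"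
  shows "elementary_collapse ((`) g ` K) ((`) g ` K')"
proof -
  obtain \<sigma> \<tau> where st: "\<sigma> \<in> K" "\<tau> \<in> K" "\<sigma> \<subset> \<tau>" and fr: "\<forall>\<rho>\<in>K. \<sigma> \<subseteq> \<rho> \<longrightarrow> \<rho> = \<sigma> \<or> \<rho> = \<tau>"
    and K': "K' = K - {\<sigma>, \<tau>}"
    using ec unfolding elementary_collapse_def by blast
  let ?U = "\<Union>K"
  have sub: "\<rho> \<subseteq> ?U" if "\<rho> \<in> K" for \<rho> using that by blast
  have inj2: "inj_on ((`) g) K"
    by (rule inj_onI) (metis g inj_on_image_eq_iff sub)
  show ?thesis unfolding elementary_collapse_def
  proof (intro exI conjI ballI impI)
    show "g ` \<sigma> \<in> (`) g ` K" "g ` \<tau> \<in> (`) g ` K" using st by auto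
    show "g ` \<sigma> \<subset> g ` \<tau>" using st g sub by (metis inj_on_image_eq_iff inj_on_image_subset_iff psubset_eq)
    show "\<rho> = g ` \<sigma> \<or> \<rho> = g ` \<tau>" if a1: "\<rho> \<in> (`) g ` K" and a2: "g ` \<sigma> \<subseteq> \<rho>" for \<rho>
    proof -
      obtain \<rho>0 where r0: "\<rho>0 \<in> K" "\<rho> = g ` \<rho>0" using a1 by blast
      have "\<sigma> \<subseteq> \<rho>0" using a2 r0 st g sub by (metis inj_on_image_subset_iff)
      then have "\<rho>0 = \<sigma> \<or> \<rho>0 = \<tau>" using fr r0 by blast
      then show ?thesis using r0 by auto
    qed
    show "(`) g ` K' = (`) g ` K - {g ` \<sigma>, g ` \<tau>}"
      unfolding K' using inj2 st by (auto simp: inj_on_image_set_diff inj_on_eq_iff)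
  qed
qed

lemma elem_collapse_subset: "elementary_collapse K K' \<Longrightarrow> K' \<subseteq> K"
  unfolding elementary_collapse_def by auto

lemma collapses_relabel:
  assumes "collapses_to K L" "inj_on g (\<Union>K)"
  shows "collapses_to ((`) g ` K) ((`) g ` L)"
proof -
  have "(K, L) \<in> {(A, B). elementary_collapse A B}\<^sup>*" using assms(1) unfolding collapses_to_def .
  then have "collapses_to ((`) g ` K) ((`) g ` L) \<and> L \<subseteq> K"
  proof (induction rule: rtrancl_induct)
    case base then show ?case by (simp add: collapses_to_def)
  next
    case (step Y Z)
    then have ec: "elementary_collapse Y Z" and YK: "Y \<subseteq> K" by auto
    have "inj_on g (\<Union>Y)" using assms(2) YK by (meson Sup_subset_mono inj_on_subset)
    then have "elementary_collapse ((`) g ` Y) ((`) g ` Z)" by (rule elem_collapse_relabel[OF ec])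
    then show ?case using step elem_collapse_subset[OF ec] unfolding collapses_to_def
      by (auto intro: rtrancl_into_rtrancl)
  qed
  then show ?thesis by blast
qed





definition T3 :: "(real \<times> real) set" where
  "T3 = {(a, b). 0 \<le> a \<and> 0 \<le> b \<and> a + b \<le> 1 \<and> (a = 0 \<or> b = 0 \<or> a + b = 1)}"

definition u3 :: "real \<Rightarrow> real \<Rightarrow> complex" where
  "u3 a b = Complex (a - 1/3) (b - 1/3)"

definition gauge :: "real \<Rightarrow> real \<Rightarrow> real" where
  "gauge a b = max (max (1 - 3*a) (1 - 3*b)) (3*a + 3*b - 2)"

lemma gauge_T3: "(a, b) \<in> T3 \<Longrightarrow> gauge a b = 1"
  unfolding T3_def gauge_def by auto

lemma u3_nz: "(a, b) \<in> T3 \<Longrightarrow> u3 a b \<noteq> 0"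
  unfolding T3_def u3_def by (auto simp: complex_eq_iff)

lemma sgn_eq_scale:
  fixes u v :: complex
  assumes "u \<noteq> 0" "v \<noteq> 0" "sgn u = sgn v"
  shows "v = (norm v / norm u) *\<^sub>R u"
proof -
  have "v = norm v *\<^sub>R sgn v" using assms(2) by (simp add: sgn_div_norm)
  also have "\<dots> = norm v *\<^sub>R sgn u" using assms by simp
  also have "\<dots> = (norm v / norm u) *\<^sub>R u" by (simp add: sgn_div_norm divide_inverse)
  finally show ?thesis .
qed

lemma T3_unique:
  assumes ab: "(a, b) \<in> T3" and ab': "(a', b') \<in> T3" and eq: "sgn (u3 a b) = sgn (u3 a' b')"
  shows "a = a' \<and> b = b'"
proof -
  define l where "l = norm (u3 a' b') / norm (u3 a b)"
  have lp: "l > 0" unfolding l_def using u3_nz[OF ab] u3_nz[OF ab'] by simp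
  have "u3 a' b' = l *\<^sub>R u3 a b" unfolding l_def by (rule sgn_eq_scale[OF u3_nz[OF ab] u3_nz[OF ab'] eq])
  then have e1: "a' - 1/3 = l * (a - 1/3)" and e2: "b' - 1/3 = l * (b - 1/3)"
    unfolding u3_def by (auto simp: complex_eq_iff)
  have "gauge a' b' = l * gauge a b"
  proof -
    have "1 - 3*a' = l * (1 - 3*a)" "1 - 3*b' = l * (1 - 3*b)" "3*a' + 3*b' - 2 = l * (3*a + 3*b - 2)"
      using e1 e2 by (auto simp: algebra_simps)
    moreover have mx: "\<And>x y. max (l*x) (l*y) = l * max x y" using lp by (smt (verit, del_insts) mult_le_cancel_left_pos)
    ultimately show ?thesis unfolding gauge_def by simp
  qed
  then have "l = 1" using gauge_T3[OF ab] gauge_T3[OF ab'] by simp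
  then show ?thesis using e1 e2 by simp
qed

lemma T3_exists:
  fixes w :: complex
  assumes "norm w = 1"
  shows "\<exists>a b. (a, b) \<in> T3 \<and> sgn (u3 a b) = w"
proof -
  define M where "M = max (max (- Re w) (- Im w)) (Re w + Im w)"
  have Mp: "M > 0"
  proof (rule ccontr)
    assume "\<not> M > 0"
    then have "Re w = 0" "Im w = 0" unfolding M_def by auto
    then have "w = 0" by (simp add: complex_eq_iff)
    then show False using assms by simp
  qed
  define a where "a = (M + Re w) / (3*M)"
  define b where "b = (M + Im w) / (3*M)"
  have h1: "- Re w \<le> M" "- Im w \<le> M" "Re w + Im w \<le> M" unfolding M_def by auto
  have h2: "M = - Re w \<or> M = - Im w \<or> M = Re w + Im w" unfolding M_def by auto
  have ab1: "1 - a - b = (M - Re w - Im w) / (3*M)" unfolding a_def b_def using Mp by (simp add: field_simps)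
  have "0 \<le> a" "0 \<le> b" unfolding a_def b_def using h1 Mp by auto
  moreover have "0 \<le> 1 - a - b" unfolding ab1 using h1 Mp by auto
  moreover have "a = 0 \<or> b = 0 \<or> 1 - a - b = 0" unfolding ab1 using h2 Mp by (auto simp: a_def b_def)
  ultimately have "(a, b) \<in> T3" unfolding T3_def by auto
  moreover have "sgn (u3 a b) = w"
  proof -
    have e: "u3 a b = of_real (1 / (3*M)) * w"
      unfolding u3_def a_def b_def using Mp by (simp add: complex_eq_iff field_simps)
    have "sgn (u3 a b) = sgn (of_real (1 / (3*M)) :: complex) * sgn w" unfolding e by (rule sgn_mult)
    also have "sgn (of_real (1 / (3*M)) :: complex) = of_real (sgn (1 / (3*M)))" by (rule sgn_of_real)
    also have "sgn (1 / (3*M)) = (1::real)" using Mp by simp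
    also have "sgn w = w" using assms by (simp add: sgn_div_norm)
    finally show ?thesis by simp
  qed
  ultimately show ?thesis by blast
qed



definition Zc :: "(nat \<Rightarrow> nat) \<Rightarrow> (nat \<Rightarrow> nat) \<Rightarrow> nat set set" where
  "Zc P Q = insert {0} (\<Union>k\<in>{1..4}. {{P k}, {Q k}, {0, P k}, {P k, Q k}, {0, Q k}})"

definition om0 :: complex where "om0 = sgn (u3 0 0)"

definition Wset :: "complex set" where
  "Wset = {z. \<exists>k\<in>{1..4}. cmod (z - of_nat k) = real k}"

locale wedgeZ =
  fixes P Q :: "nat \<Rightarrow> nat"
  assumes PQ: "\<And>k. k \<in> {1..4} \<Longrightarrow> P k \<noteq> 0 \<and> Q k \<noteq> 0 \<and> P k \<noteq> Q k"
    and PQd: "\<And>k j. k \<in> {1..4} \<Longrightarrow> j \<in> {1..4} \<Longrightarrow> k \<noteq> j \<Longrightarrow> P k \<noteq> P j \<and> Q k \<noteq> Q j \<and> P k \<noteq> Q j"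
begin

definition pt :: "nat \<Rightarrow> real \<Rightarrow> real \<Rightarrow> nat \<Rightarrow> real" where
  "pt k a b = (\<lambda>v. if v = P k then a else if v = Q k then b else if v = 0 then 1 - a - b else 0)"

definition Fw :: "(nat \<Rightarrow> real) \<Rightarrow> complex" where
  "Fw x = (\<Sum>k\<in>{1..4}. of_nat k * (1 - cnj om0 * sgn (u3 (x (P k)) (x (Q k)))))"

lemma pt_P: "k \<in> {1..4} \<Longrightarrow> j \<in> {1..4} \<Longrightarrow> pt k a b (P j) = (if j = k then a else 0)"
  using PQ[of j] PQd[of j k] by (auto simp: pt_def)

lemma pt_Q: "k \<in> {1..4} \<Longrightarrow> j \<in> {1..4} \<Longrightarrow> pt k a b (Q j) = (if j = k then b else 0)"
  using PQ[of j] PQ[of k] PQd[of j k] PQd[of k j] by (auto simp: pt_def)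

lemma pt_0: "k \<in> {1..4} \<Longrightarrow> pt k a b 0 = 1 - a - b"
  using PQ[of k] by (auto simp: pt_def)

lemma om0_norm: "norm om0 = 1"
  unfolding om0_def using u3_nz[of 0 0] by (simp only: norm_sgn T3_def) simp

lemma cnj_om0: "cnj om0 * om0 = 1"
proof -
  have "om0 * cnj om0 = of_real ((norm om0)\<^sup>2)" by (rule complex_norm_square[symmetric])
  then show ?thesis using om0_norm by (simp add: mult.commute)
qed

lemma Fw_pt:
  assumes k: "k \<in> {1..4}"
  shows "Fw (pt k a b) = of_nat k * (1 - cnj om0 * sgn (u3 a b))"
proof -
  have "Fw (pt k a b) = (\<Sum>j\<in>{1..4}. if j = k then of_nat k * (1 - cnj om0 * sgn (u3 a b)) else 0)"
    unfolding Fw_def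
  proof (rule sum.cong)
    fix j assume j: "j \<in> {1..4::nat}"
    show "of_nat j * (1 - cnj om0 * sgn (u3 (pt k a b (P j)) (pt k a b (Q j)))) =
          (if j = k then of_nat k * (1 - cnj om0 * sgn (u3 a b)) else 0)"
      using pt_P[OF k j] pt_Q[OF k j] cnj_om0 by (simp add: om0_def[symmetric])
  qed simp
  also have "\<dots> = of_nat k * (1 - cnj om0 * sgn (u3 a b))" using k by simp
  finally show ?thesis .
qed

lemma rset_Zc: "rset (Zc P Q) = (\<Union>k\<in>{1..4}. (\<lambda>(a, b). pt k a b) ` T3)"
proof
  show "rset (Zc P Q) \<subseteq> (\<Union>k\<in>{1..4}. (\<lambda>(a, b). pt k a b) ` T3)"
  proof
    fix x assume "x \<in> rset (Zc P Q)"
    then obtain \<sigma> where nn: "\<forall>v. 0 \<le> x v" and \<sigma>: "\<sigma> \<in> Zc P Q" "{v. x v \<noteq> 0} \<subseteq> \<sigma>" "sum x \<sigma> = 1"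
      unfolding rset_def by blast
    have "\<sigma> = {0} \<or> (\<exists>k\<in>{1..4}. \<sigma> = {P k} \<or> \<sigma> = {Q k} \<or> \<sigma> = {0, P k} \<or> \<sigma> = {P k, Q k} \<or> \<sigma> = {0, Q k})"
      using \<sigma>(1) unfolding Zc_def by blast
    then have "\<exists>k\<in>{1..4}. \<sigma> \<subseteq> {0, P k, Q k} \<and> (P k \<notin> \<sigma> \<or> Q k \<notin> \<sigma> \<or> 0 \<notin> \<sigma>)"
    proof
      assume "\<sigma> = {0}" then show ?thesis using PQ[of 1] by (intro bexI[of _ 1]) auto
    next
      assume "\<exists>k\<in>{1..4}. \<sigma> = {P k} \<or> \<sigma> = {Q k} \<or> \<sigma> = {0, P k} \<or> \<sigma> = {P k, Q k} \<or> \<sigma> = {0, Q k}"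
      then obtain k where k: "k \<in> {1..4::nat}" and
        "\<sigma> = {P k} \<or> \<sigma> = {Q k} \<or> \<sigma> = {0, P k} \<or> \<sigma> = {P k, Q k} \<or> \<sigma> = {0, Q k}" by blast
      have d: "P k \<noteq> 0" "Q k \<noteq> 0" "P k \<noteq> Q k" using PQ[OF k] by auto
      from \<open>\<sigma> = {P k} \<or> _\<close> have "\<sigma> \<subseteq> {0, P k, Q k} \<and> (P k \<notin> \<sigma> \<or> Q k \<notin> \<sigma> \<or> 0 \<notin> \<sigma>)"
        using d by (elim disjE) auto
      then show ?thesis using k by blast
    qed
    then obtain k where k: "k \<in> {1..4}" and s3: "\<sigma> \<subseteq> {0, P k, Q k}"
      and miss: "P k \<notin> \<sigma> \<or> Q k \<notin> \<sigma> \<or> 0 \<notin> \<sigma>" by blast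
    have d: "P k \<noteq> 0" "Q k \<noteq> 0" "P k \<noteq> Q k" using PQ[OF k] by auto
    have fs: "finite \<sigma>" by (rule sum_one_finite[OF \<sigma>(3)])
    have "sum x {0, P k, Q k} = sum x \<sigma>"
      by (rule sum_supp_eq) (use \<sigma>(2) s3 fs in auto)
    then have s1: "x 0 + x (P k) + x (Q k) = 1" using \<sigma>(3) d by (simp add: add.assoc)
    have z: "x v = 0" if "v \<notin> \<sigma>" for v using that \<sigma>(2) by blast
    have xe: "x = pt k (x (P k)) (x (Q k))"
    proof
      fix v
      show "x v = pt k (x (P k)) (x (Q k)) v"
      proof (cases "v = P k \<or> v = Q k \<or> v = 0")
        case True then show ?thesis using s1 d by (auto simp: pt_def)
      next
        case False
        then have "x v = 0" using z s3 by blast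
        then show ?thesis using False by (simp add: pt_def)
      qed
    qed
    have T3m: "(x (P k), x (Q k)) \<in> T3"
    proof -
      have "0 \<le> x 0" "0 \<le> x (P k)" "0 \<le> x (Q k)" using nn by auto
      moreover have "x (P k) = 0 \<or> x (Q k) = 0 \<or> x 0 = 0" using miss z by blast
      ultimately show ?thesis using s1 unfolding T3_def by auto
    qed
    have "x = (\<lambda>(a, b). pt k a b) (x (P k), x (Q k))" using xe by simp
    then have "x \<in> (\<lambda>(a, b). pt k a b) ` T3" using T3m by (rule image_eqI)
    then show "x \<in> (\<Union>k\<in>{1..4}. (\<lambda>(a, b). pt k a b) ` T3)" using k by blast
  qed
next
  show "(\<Union>k\<in>{1..4}. (\<lambda>(a, b). pt k a b) ` T3) \<subseteq> rset (Zc P Q)"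
  proof clarify
    fix k a b assume k: "k \<in> {1..4::nat}" and ab: "(a, b) \<in> T3"
    have d: "P k \<noteq> 0" "Q k \<noteq> 0" "P k \<noteq> Q k" using PQ[OF k] by auto
    from ab have a0: "0 \<le> a" and b0: "0 \<le> b" and ab1: "a + b \<le> 1" and tri: "a = 0 \<or> b = 0 \<or> a + b = 1"
      unfolding T3_def by auto
    have nn: "\<forall>v. 0 \<le> pt k a b v" using a0 b0 ab1 by (auto simp: pt_def)
    have supp3: "{v. pt k a b v \<noteq> 0} \<subseteq> {0, P k, Q k}" by (auto simp: pt_def split: if_splits)
    have sum3: "sum (pt k a b) {0, P k, Q k} = 1" using d by (simp add: pt_def)
    obtain \<sigma> where \<sigma>: "\<sigma> \<in> Zc P Q" "\<sigma> \<subseteq> {0, P k, Q k}" "{v. pt k a b v \<noteq> 0} \<subseteq> \<sigma>"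
    proof -
      have m1: "{0, Q k} \<in> Zc P Q" "{0, P k} \<in> Zc P Q" "{P k, Q k} \<in> Zc P Q"
        unfolding Zc_def using k by blast+
      consider "a = 0" | "b = 0" | "a + b = 1" using tri by blast
      then show ?thesis
      proof cases
        case 1
        have "{v. pt k a b v \<noteq> 0} \<subseteq> {0, Q k}" using 1 by (auto simp: pt_def split: if_splits)
        then show ?thesis using that[OF m1(1)] by blast
      next
        case 2
        have "{v. pt k a b v \<noteq> 0} \<subseteq> {0, P k}" using 2 by (auto simp: pt_def split: if_splits)
        then show ?thesis using that[OF m1(2)] by blast
      next
        case 3
        have "{v. pt k a b v \<noteq> 0} \<subseteq> {P k, Q k}" using 3 by (auto simp: pt_def split: if_splits)
        then show ?thesis using that[OF m1(3)] by blast
      qed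
    qed
    have "sum (pt k a b) \<sigma> = 1"
      using sum3 sum_supp_eq[OF \<sigma>(3) supp3] finite_subset[OF \<sigma>(2)] by simp
    then show "pt k a b \<in> rset (Zc P Q)" using nn \<sigma> unfolding rset_def by blast
  qed
qed


lemma T3_00: "(0, 0) \<in> T3" unfolding T3_def by simp

lemma norm_cs: "(a, b) \<in> T3 \<Longrightarrow> norm (cnj om0 * sgn (u3 a b)) = 1"
  using u3_nz[of a b] om0_norm by (simp add: norm_mult norm_sgn)

lemma Fw_circle:
  assumes k: "k \<in> {1..4}" and ab: "(a, b) \<in> T3"
  shows "cmod (Fw (pt k a b) - of_nat k) = real k"
proof -
  have "Fw (pt k a b) - of_nat k = - (of_nat k * (cnj om0 * sgn (u3 a b)))"
    by (simp add: Fw_pt[OF k] algebra_simps)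
  then show ?thesis using norm_cs[OF ab] by (simp add: norm_mult)
qed

lemma Fw_zero:
  assumes k: "k \<in> {1..4}" and ab: "(a, b) \<in> T3" and z: "Fw (pt k a b) = 0"
  shows "a = 0 \<and> b = 0"
proof -
  have kz: "(of_nat k :: complex) \<noteq> 0" using k by auto
  have one: "cnj om0 * sgn (u3 a b) = 1" using z kz by (simp add: Fw_pt[OF k])
  have c1: "om0 * cnj om0 = 1" using cnj_om0 by (simp add: mult.commute)
  have "sgn (u3 a b) = (om0 * cnj om0) * sgn (u3 a b)" using c1 by simp
  also have "\<dots> = om0 * (cnj om0 * sgn (u3 a b))" by (simp add: mult.assoc)
  also have "\<dots> = om0" using one by simp
  finally have "sgn (u3 a b) = sgn (u3 0 0)" by (simp add: om0_def)
  then have "0 = a \<and> 0 = b" using T3_unique[OF T3_00 ab] by simp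
  then show ?thesis by simp
qed

lemma circles_meet:
  fixes z :: complex
  assumes "cmod (z - of_nat k) = real k" "cmod (z - of_nat j) = real j" "k \<noteq> j"
  shows "z = 0"
proof -
  have e1: "(Re z - real k)\<^sup>2 + (Im z)\<^sup>2 = (real k)\<^sup>2"
  proof -
    have s0: "0 \<le> (Re z - real k)\<^sup>2 + (Im z)\<^sup>2" by simp
    have "sqrt ((Re z - real k)\<^sup>2 + (Im z)\<^sup>2) = real k" using assms(1) by (simp add: cmod_def)
    then have "(sqrt ((Re z - real k)\<^sup>2 + (Im z)\<^sup>2))\<^sup>2 = (real k)\<^sup>2" by simp
    then show ?thesis using s0 by simp
  qed
  have e2: "(Re z - real j)\<^sup>2 + (Im z)\<^sup>2 = (real j)\<^sup>2"
  proof -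
    have s0: "0 \<le> (Re z - real j)\<^sup>2 + (Im z)\<^sup>2" by simp
    have "sqrt ((Re z - real j)\<^sup>2 + (Im z)\<^sup>2) = real j" using assms(2) by (simp add: cmod_def)
    then have "(sqrt ((Re z - real j)\<^sup>2 + (Im z)\<^sup>2))\<^sup>2 = (real j)\<^sup>2" by simp
    then show ?thesis using s0 by simp
  qed
  have a: "Re z * Re z + Im z * Im z = 2 * real k * Re z" using e1 by (simp add: power2_eq_square algebra_simps)
  have b: "Re z * Re z + Im z * Im z = 2 * real j * Re z" using e2 by (simp add: power2_eq_square algebra_simps)
  have "2 * real k * Re z = 2 * real j * Re z" using a b by linarith
  then have r: "Re z = 0" using assms(3) by auto
  then have "(Im z)\<^sup>2 = 0" using e1 by (simp add: power2_eq_square)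
  then show ?thesis using r by (simp add: complex_eq_iff)
qed

lemma pt00: "k \<in> {1..4} \<Longrightarrow> pt k 0 0 = (\<lambda>v. if v = 0 then 1 else 0)"
  using PQ[of k] by (auto simp: pt_def fun_eq_iff)

lemma Fw_inj: "inj_on Fw (rset (Zc P Q))"
proof (rule inj_onI)
  fix x y assume x: "x \<in> rset (Zc P Q)" and y: "y \<in> rset (Zc P Q)" and e: "Fw x = Fw y"
  from x obtain k a b where k: "k \<in> {1..4}" and ab: "(a, b) \<in> T3" and xe: "x = pt k a b"
    unfolding rset_Zc by auto
  from y obtain j a' b' where j: "j \<in> {1..4}" and ab': "(a', b') \<in> T3" and ye: "y = pt j a' b'"
    unfolding rset_Zc by auto
  show "x = y"
  proof (cases "k = j")
    case True
    have "of_nat k * (1 - cnj om0 * sgn (u3 a b)) = of_nat k * (1 - cnj om0 * sgn (u3 a' b'))"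
      using e unfolding xe ye True using Fw_pt[OF j] by simp
    then have "cnj om0 * sgn (u3 a b) = cnj om0 * sgn (u3 a' b')" using k by simp
    moreover have "cnj om0 \<noteq> 0" using om0_norm by auto
    ultimately have "sgn (u3 a b) = sgn (u3 a' b')" by simp
    then show ?thesis using T3_unique[OF ab ab'] xe ye True by simp
  next
    case False
    have "Fw x = 0"
      by (rule circles_meet[OF _ _ False]) (use Fw_circle[OF k ab] Fw_circle[OF j ab'] e xe ye in auto)
    then have "a = 0 \<and> b = 0" "a' = 0 \<and> b' = 0" using Fw_zero[OF k ab] Fw_zero[OF j ab'] e xe ye by auto
    then show ?thesis using xe ye pt00[OF k] pt00[OF j] by simp
  qed
qed

lemma Fw_image: "Fw ` rset (Zc P Q) = Wset"
proof
  show "Fw ` rset (Zc P Q) \<subseteq> Wset"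
    unfolding rset_Zc Wset_def using Fw_circle by fastforce
  show "Wset \<subseteq> Fw ` rset (Zc P Q)"
  proof
    fix z assume "z \<in> Wset"
    then obtain k where k: "k \<in> {1..4}" and c: "cmod (z - of_nat k) = real k" unfolding Wset_def by blast
    have kp: "real k > 0" using k by auto
    define w where "w = om0 * (1 - z / of_nat k)"
    have "1 - z / of_nat k = - (z - of_nat k) / of_nat k" using kp by (simp add: field_simps)
    then have "norm (1 - z / of_nat k) = 1" using c kp by (simp add: norm_divide norm_minus_commute)
    then have "norm w = 1" unfolding w_def using om0_norm by (simp add: norm_mult)
    then obtain a b where ab: "(a, b) \<in> T3" and sw: "sgn (u3 a b) = w" using T3_exists by blast
    have "Fw (pt k a b) = of_nat k * (1 - cnj om0 * om0 * (1 - z / of_nat k))"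
      using Fw_pt[OF k] sw unfolding w_def by (simp add: mult.assoc)
    also have "\<dots> = z" using cnj_om0 kp by (simp add: field_simps)
    finally have "z = Fw (pt k a b)" by simp
    moreover have "pt k a b \<in> rset (Zc P Q)" unfolding rset_Zc using k ab by blast
    ultimately show "z \<in> Fw ` rset (Zc P Q)" by blast
  qed
qed

lemma u3_nz_rset:
  assumes x: "x \<in> rset (Zc P Q)" and j: "j \<in> {1..4}"
  shows "u3 (x (P j)) (x (Q j)) \<noteq> 0"
proof -
  from x obtain k a b where k: "k \<in> {1..4}" and ab: "(a, b) \<in> T3" and xe: "x = pt k a b"
    unfolding rset_Zc by auto
  show ?thesis
  proof (cases "j = k")
    case True then show ?thesis using u3_nz[OF ab] xe pt_P[OF k j] pt_Q[OF k j] by simp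
  next
    case False then show ?thesis using u3_nz[OF T3_00] xe pt_P[OF k j] pt_Q[OF k j] by simp
  qed
qed

lemma Fw_cont: "continuous_map (realization (Zc P Q)) euclidean Fw"
  unfolding continuous_map_atin
proof
  fix x assume x: "x \<in> topspace (realization (Zc P Q))"
  let ?F = "atin (realization (Zc P Q)) x"
  have co: "((\<lambda>y. y v) \<longlongrightarrow> x v) ?F" for v
    using limitin_continuous_map[OF cont_coord x refl] by simp
  have "(Fw \<longlongrightarrow> Fw x) ?F"
    unfolding Fw_def u3_def
    apply (intro tendsto_sum tendsto_mult tendsto_const tendsto_diff tendsto_sgn tendsto_Complex co)
    using u3_nz_rset[of x] x by (auto simp: u3_def)
  then show "limitin euclidean Fw (Fw x) ?F" by simp
qed

lemma T3_compact: "compact T3"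
proof -
  have "T3 = {p. 0 \<le> fst p} \<inter> {p. 0 \<le> snd p} \<inter> {p. fst p + snd p \<le> 1} \<inter>
      ({p. fst p = 0} \<union> {p. snd p = 0} \<union> {p. fst p + snd p = 1})"
    unfolding T3_def by auto
  moreover have "closed \<dots>"
    by (intro closed_Int closed_Un closed_Collect_le closed_Collect_eq continuous_intros)
  ultimately have cl: "closed T3" by simp
  have "T3 \<subseteq> {0..1} \<times> {0..1}" unfolding T3_def by auto
  then have "bounded T3" by (rule bounded_subset[OF bounded_Times[OF bounded_closed_interval bounded_closed_interval]])
  then show ?thesis using cl by (simp add: compact_eq_bounded_closed)
qed

lemma pt_cont: "continuous_map euclidean (powertop_real UNIV) (\<lambda>(a, b). pt k a b)"
  unfolding continuous_map_componentwise_UNIV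
proof
  fix v
  have e: "(\<lambda>p. (case p of (a, b) \<Rightarrow> pt k a b) v) =
    (if v = P k then fst else if v = Q k then snd else if v = 0 then (\<lambda>p. 1 - fst p - snd p) else (\<lambda>p. 0))"
    by (auto simp: pt_def fun_eq_iff)
  show "continuous_map euclidean euclideanreal (\<lambda>p. (case p of (a, b) \<Rightarrow> pt k a b) v)"
    unfolding e by (auto intro!: continuous_intros)
qed

lemma Zc_compact: "compact_space (realization (Zc P Q))"
  unfolding realization_eq
proof (rule compact_space_subtopology)
  have "rset (Zc P Q) = \<Union>((\<lambda>k. (\<lambda>(a, b). pt k a b) ` T3) ` {1..4})" unfolding rset_Zc by simp
  moreover have "compactin (powertop_real UNIV) \<dots>"
    by (intro compactin_Union finite_imageI) (auto intro!: image_compactin[OF _ pt_cont] simp: T3_compact)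
  ultimately show "compactin (powertop_real UNIV) (rset (Zc P Q))" by simp
qed

lemma wedge_homeo: "realization (Zc P Q) homeomorphic_space wedge_circles 4"
proof -
  have W: "wedge_circles 4 = top_of_set Wset" unfolding wedge_circles_def Wset_def by simp
  have "homeomorphic_map (realization (Zc P Q)) (top_of_set Wset) Fw"
  proof (rule bijective_closed_imp_homeomorphic_map)
    show c: "continuous_map (realization (Zc P Q)) (top_of_set Wset) Fw"
      using Fw_cont Fw_image by (auto simp: continuous_map_in_subtopology)
    show "closed_map (realization (Zc P Q)) (top_of_set Wset) Fw"
      by (rule T1_Spaces.continuous_imp_closed_map[OF c Zc_compact])
         (simp add: Hausdorff_space_subtopology)
    show "Fw ` topspace (realization (Zc P Q)) = topspace (top_of_set Wset)"
      using Fw_image by simp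
    show "inj_on Fw (topspace (realization (Zc P Q)))" using Fw_inj by simp
  qed
  then show ?thesis unfolding W by (rule homeomorphic_map_imp_homeomorphic_space)
qed

end

lemma ins_eq: "(insert a A = B) \<longleftrightarrow> (a \<in> B \<and> A - {a} = B - {a})"
  by blast

lemma ball_Diff_eq: "(\<forall>x\<in>A - B. P x) \<longleftrightarrow> (\<forall>x\<in>A. x \<notin> B \<longrightarrow> P x)"
  by blast

lemma filter_Collect_insert: "{x \<in> insert a A. P x} = (if P a then insert a {x \<in> A. P x} else {x \<in> A. P x})"
  by auto

lemma filter_Collect_empty: "{x \<in> {}. P x} = {}"
  by auto

definition g :: "nat \<Rightarrow> nat set \<times> nat set" where
  "g i = (if i = 0 then ({0},{0,1}) else (if i = 1 then ({1},{0,1}) else (if i = 2 then ({1},{1,2}) else (if i = 3 then ({2},{1,2}) else (if i = 4 then ({2},{0,2}) else (if i = 5 then ({0},{0,2}) else (if i = 6 then ({0,1},{0,1,2}) else (if i = 7 then ({1,2},{0,1,2}) else ({0,2},{0,1,2})))))))))"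

lemma g_simps [simp]: "g 0 = ({0},{0,1})" "g 1 = ({1},{0,1})" "g 2 = ({1},{1,2})" "g 3 = ({2},{1,2})" "g 4 = ({2},{0,2})" "g 5 = ({0},{0,2})" "g 6 = ({0,1},{0,1,2})" "g 7 = ({1,2},{0,1,2})" "g 8 = ({0,2},{0,1,2})" "g (Suc 0) = ({1},{0,1})"
  by (simp_all add: g_def)

definition K1 :: "nat set set" where "K1 = {{0}, {1}, {2}, {3}, {4}, {5}, {0,2}, {0,3}, {0,4}, {1,3}, {1,4}, {1,5}, {2,4}, {2,5}, {3,5}}"
definition K2 :: "nat set set" where "K2 = {{0}, {1}, {2}, {3}, {4}, {5}, {0,2}, {0,3}, {0,4}, {1,3}, {1,4}, {1,5}, {2,4}, {2,5}, {3,5}, {6}, {2,6}, {3,6}, {4,6}, {5,6}, {2,4,6}, {2,5,6}, {3,5,6}, {7}, {0,7}, {1,7}, {4,7}, {5,7}, {0,4,7}, {1,4,7}, {1,5,7}, {8}, {0,8}, {1,8}, {2,8}, {3,8}, {0,2,8}, {0,3,8}, {1,3,8}}"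

lemma Delta2_eq: "Delta2 = {{0},{1},{2},{0,1},{1,2},{0,2},{0,1,2}}"
proof -
  have "Delta2 = Pow {0,1,2} - {{}}" unfolding Delta2_def by auto
  also have "\<dots> = {{0},{1},{2},{0,1},{1,2},{0,2},{0,1,2}}" by (simp add: Pow_insert ins_eq insert_Diff_if)
  finally show ?thesis .
qed

lemma bdDelta2_eq: "bdDelta2 = {{0},{1},{2},{0,1},{1,2},{0,2}}"
proof -
  have "bdDelta2 = Pow {0,1,2} - {{}, {0,1,2}}" unfolding bdDelta2_def by auto
  also have "\<dots> = {{0},{1},{2},{0,1},{1,2},{0,2}}" by (simp add: Pow_insert ins_eq insert_Diff_if)
  finally show ?thesis .
qed

lemma hasse_filter: "hasse K = {p \<in> K \<times> K. fst p \<subset> snd p \<and> card (snd p) = card (fst p) + 1}"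
  unfolding hasse_def by auto

lemma Set_filter_insert: "Set.filter P (insert a A) = (if P a then insert a (Set.filter P A) else Set.filter P A)"
  by auto

lemma hasse_Delta2: "hasse Delta2 = {g 0, g 1, g 2, g 3, g 4, g 5, g 6, g 7, g 8}"
proof
  have all: "\<forall>\<sigma>\<in>Delta2. \<forall>\<tau>\<in>Delta2. \<sigma> \<subset> \<tau> \<and> card \<tau> = card \<sigma> + 1 \<longrightarrow> (\<sigma>, \<tau>) \<in> {g 0, g 1, g 2, g 3, g 4, g 5, g 6, g 7, g 8}"
    unfolding Delta2_eq by (simp add: ins_eq insert_Diff_if psubset_eq)
  show "hasse Delta2 \<subseteq> {g 0, g 1, g 2, g 3, g 4, g 5, g 6, g 7, g 8}"
  proof
    fix p assume "p \<in> hasse Delta2"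
    then obtain \<sigma> \<tau> where "p = (\<sigma>, \<tau>)" "\<sigma> \<in> Delta2" "\<tau> \<in> Delta2" "\<sigma> \<subset> \<tau>" "card \<tau> = card \<sigma> + 1"
      unfolding hasse_def by blast
    then show "p \<in> {g 0, g 1, g 2, g 3, g 4, g 5, g 6, g 7, g 8}" using all by blast
  qed
  show "{g 0, g 1, g 2, g 3, g 4, g 5, g 6, g 7, g 8} \<subseteq> hasse Delta2" unfolding hasse_def Delta2_eq
    by (simp add: ins_eq insert_Diff_if psubset_eq)
qed

lemma hasse_bdDelta2: "hasse bdDelta2 = {g 0, g 1, g 2, g 3, g 4, g 5}"
proof
  have all: "\<forall>\<sigma>\<in>bdDelta2. \<forall>\<tau>\<in>bdDelta2. \<sigma> \<subset> \<tau> \<and> card \<tau> = card \<sigma> + 1 \<longrightarrow> (\<sigma>, \<tau>) \<in> {g 0, g 1, g 2, g 3, g 4, g 5}"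
    unfolding bdDelta2_eq by (simp add: ins_eq insert_Diff_if psubset_eq)
  show "hasse bdDelta2 \<subseteq> {g 0, g 1, g 2, g 3, g 4, g 5}"
  proof
    fix p assume "p \<in> hasse bdDelta2"
    then obtain \<sigma> \<tau> where "p = (\<sigma>, \<tau>)" "\<sigma> \<in> bdDelta2" "\<tau> \<in> bdDelta2" "\<sigma> \<subset> \<tau>" "card \<tau> = card \<sigma> + 1"
      unfolding hasse_def by blast
    then show "p \<in> {g 0, g 1, g 2, g 3, g 4, g 5}" using all by blast
  qed
  show "{g 0, g 1, g 2, g 3, g 4, g 5} \<subseteq> hasse bdDelta2" unfolding hasse_def bdDelta2_eq
    by (simp add: ins_eq insert_Diff_if psubset_eq)
qed


definition potf :: "int list \<Rightarrow> nat set \<Rightarrow> int" where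
  "potf L x = (if x = {0} then L!0 else if x = {1} then L!1 else if x = {2} then L!2 else
     if x = {0,1} then L!3 else if x = {1,2} then L!4 else if x = {0,2} then L!5 else L!6)"

lemma morse_by_pot:
  fixes f :: "'a set \<Rightarrow> int"
  assumes "W \<noteq> {}" "W \<subseteq> hasse K" "is_matching W"
    "\<forall>(a, b)\<in>hasse K - W. f a < f b" "\<forall>(a, b)\<in>W. f b < f a"
  shows "W \<in> morse_complex K"
proof -
  have "acyclic ((hasse K - W) \<union> W\<inverse>)"
  proof (rule acyclicI_order[where f = "\<lambda>x. - f x"])
    fix a b assume "(a, b) \<in> (hasse K - W) \<union> W\<inverse>"
    then show "- f b < - f a" using assms(4,5) by auto
  qed
  then show ?thesis using assms unfolding morse_complex_def acyclic_matching_def by blast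
qed

lemma mD_0: "{g 0} \<in> morse_complex Delta2"
  by (rule morse_by_pot[where f="potf [2,0,0,1,1,3,4]"]) (simp_all add: hasse_Delta2 is_matching_def potf_def ins_eq insert_Diff_if)

lemma mD_1: "{g 1} \<in> morse_complex Delta2"
  by (rule morse_by_pot[where f="potf [0,2,0,1,3,1,4]"]) (simp_all add: hasse_Delta2 is_matching_def potf_def ins_eq insert_Diff_if)

lemma mD_2: "{g 2} \<in> morse_complex Delta2"
  by (rule morse_by_pot[where f="potf [0,2,0,3,1,1,4]"]) (simp_all add: hasse_Delta2 is_matching_def potf_def ins_eq insert_Diff_if)

lemma mD_3: "{g 3} \<in> morse_complex Delta2"
  by (rule morse_by_pot[where f="potf [0,0,2,1,1,3,4]"]) (simp_all add: hasse_Delta2 is_matching_def potf_def ins_eq insert_Diff_if)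

lemma mD_4: "{g 4} \<in> morse_complex Delta2"
  by (rule morse_by_pot[where f="potf [0,0,2,1,3,1,4]"]) (simp_all add: hasse_Delta2 is_matching_def potf_def ins_eq insert_Diff_if)

lemma mD_5: "{g 5} \<in> morse_complex Delta2"
  by (rule morse_by_pot[where f="potf [2,0,0,3,1,1,4]"]) (simp_all add: hasse_Delta2 is_matching_def potf_def ins_eq insert_Diff_if)

lemma mD_0_2: "{g 0, g 2} \<in> morse_complex Delta2"
  by (rule morse_by_pot[where f="potf [4,2,0,3,1,5,6]"]) (simp_all add: hasse_Delta2 is_matching_def potf_def ins_eq insert_Diff_if)

lemma mD_0_3: "{g 0, g 3} \<in> morse_complex Delta2"
  by (rule morse_by_pot[where f="potf [2,0,2,1,1,3,4]"]) (simp_all add: hasse_Delta2 is_matching_def potf_def ins_eq insert_Diff_if)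

lemma mD_0_4: "{g 0, g 4} \<in> morse_complex Delta2"
  by (rule morse_by_pot[where f="potf [2,0,4,1,5,3,6]"]) (simp_all add: hasse_Delta2 is_matching_def potf_def ins_eq insert_Diff_if)

lemma mD_1_3: "{g 1, g 3} \<in> morse_complex Delta2"
  by (rule morse_by_pot[where f="potf [0,2,4,1,3,5,6]"]) (simp_all add: hasse_Delta2 is_matching_def potf_def ins_eq insert_Diff_if)

lemma mD_1_4: "{g 1, g 4} \<in> morse_complex Delta2"
  by (rule morse_by_pot[where f="potf [0,2,2,1,3,1,4]"]) (simp_all add: hasse_Delta2 is_matching_def potf_def ins_eq insert_Diff_if)

lemma mD_1_5: "{g 1, g 5} \<in> morse_complex Delta2"
  by (rule morse_by_pot[where f="potf [2,4,0,3,5,1,6]"]) (simp_all add: hasse_Delta2 is_matching_def potf_def ins_eq insert_Diff_if)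

lemma mD_2_4: "{g 2, g 4} \<in> morse_complex Delta2"
  by (rule morse_by_pot[where f="potf [0,4,2,5,3,1,6]"]) (simp_all add: hasse_Delta2 is_matching_def potf_def ins_eq insert_Diff_if)

lemma mD_2_5: "{g 2, g 5} \<in> morse_complex Delta2"
  by (rule morse_by_pot[where f="potf [2,2,0,3,1,1,4]"]) (simp_all add: hasse_Delta2 is_matching_def potf_def ins_eq insert_Diff_if)

lemma mD_3_5: "{g 3, g 5} \<in> morse_complex Delta2"
  by (rule morse_by_pot[where f="potf [4,0,2,5,1,3,6]"]) (simp_all add: hasse_Delta2 is_matching_def potf_def ins_eq insert_Diff_if)

lemma mD_6: "{g 6} \<in> morse_complex Delta2"
  by (rule morse_by_pot[where f="potf [0,0,0,3,1,1,2]"]) (simp_all add: hasse_Delta2 is_matching_def potf_def ins_eq insert_Diff_if)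

lemma mD_2_6: "{g 2, g 6} \<in> morse_complex Delta2"
  by (rule morse_by_pot[where f="potf [0,2,0,3,1,1,2]"]) (simp_all add: hasse_Delta2 is_matching_def potf_def ins_eq insert_Diff_if)

lemma mD_3_6: "{g 3, g 6} \<in> morse_complex Delta2"
  by (rule morse_by_pot[where f="potf [0,0,2,5,1,3,4]"]) (simp_all add: hasse_Delta2 is_matching_def potf_def ins_eq insert_Diff_if)

lemma mD_4_6: "{g 4, g 6} \<in> morse_complex Delta2"
  by (rule morse_by_pot[where f="potf [0,0,2,5,3,1,4]"]) (simp_all add: hasse_Delta2 is_matching_def potf_def ins_eq insert_Diff_if)

lemma mD_5_6: "{g 5, g 6} \<in> morse_complex Delta2"
  by (rule morse_by_pot[where f="potf [2,0,0,3,1,1,2]"]) (simp_all add: hasse_Delta2 is_matching_def potf_def ins_eq insert_Diff_if)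

lemma mD_2_4_6: "{g 2, g 4, g 6} \<in> morse_complex Delta2"
  by (rule morse_by_pot[where f="potf [0,4,2,5,3,1,4]"]) (simp_all add: hasse_Delta2 is_matching_def potf_def ins_eq insert_Diff_if)

lemma mD_2_5_6: "{g 2, g 5, g 6} \<in> morse_complex Delta2"
  by (rule morse_by_pot[where f="potf [2,2,0,3,1,1,2]"]) (simp_all add: hasse_Delta2 is_matching_def potf_def ins_eq insert_Diff_if)

lemma mD_3_5_6: "{g 3, g 5, g 6} \<in> morse_complex Delta2"
  by (rule morse_by_pot[where f="potf [4,0,2,5,1,3,4]"]) (simp_all add: hasse_Delta2 is_matching_def potf_def ins_eq insert_Diff_if)

lemma mD_7: "{g 7} \<in> morse_complex Delta2"
  by (rule morse_by_pot[where f="potf [0,0,0,1,3,1,2]"]) (simp_all add: hasse_Delta2 is_matching_def potf_def ins_eq insert_Diff_if)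

lemma mD_0_7: "{g 0, g 7} \<in> morse_complex Delta2"
  by (rule morse_by_pot[where f="potf [2,0,0,1,5,3,4]"]) (simp_all add: hasse_Delta2 is_matching_def potf_def ins_eq insert_Diff_if)

lemma mD_1_7: "{g 1, g 7} \<in> morse_complex Delta2"
  by (rule morse_by_pot[where f="potf [0,2,0,1,3,1,2]"]) (simp_all add: hasse_Delta2 is_matching_def potf_def ins_eq insert_Diff_if)

lemma mD_4_7: "{g 4, g 7} \<in> morse_complex Delta2"
  by (rule morse_by_pot[where f="potf [0,0,2,1,3,1,2]"]) (simp_all add: hasse_Delta2 is_matching_def potf_def ins_eq insert_Diff_if)

lemma mD_5_7: "{g 5, g 7} \<in> morse_complex Delta2"
  by (rule morse_by_pot[where f="potf [2,0,0,3,5,1,4]"]) (simp_all add: hasse_Delta2 is_matching_def potf_def ins_eq insert_Diff_if)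

lemma mD_0_4_7: "{g 0, g 4, g 7} \<in> morse_complex Delta2"
  by (rule morse_by_pot[where f="potf [2,0,4,1,5,3,4]"]) (simp_all add: hasse_Delta2 is_matching_def potf_def ins_eq insert_Diff_if)

lemma mD_1_4_7: "{g 1, g 4, g 7} \<in> morse_complex Delta2"
  by (rule morse_by_pot[where f="potf [0,2,2,1,3,1,2]"]) (simp_all add: hasse_Delta2 is_matching_def potf_def ins_eq insert_Diff_if)

lemma mD_1_5_7: "{g 1, g 5, g 7} \<in> morse_complex Delta2"
  by (rule morse_by_pot[where f="potf [2,4,0,3,5,1,4]"]) (simp_all add: hasse_Delta2 is_matching_def potf_def ins_eq insert_Diff_if)

lemma mD_8: "{g 8} \<in> morse_complex Delta2"
  by (rule morse_by_pot[where f="potf [0,0,0,1,1,3,2]"]) (simp_all add: hasse_Delta2 is_matching_def potf_def ins_eq insert_Diff_if)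

lemma mD_0_8: "{g 0, g 8} \<in> morse_complex Delta2"
  by (rule morse_by_pot[where f="potf [2,0,0,1,1,3,2]"]) (simp_all add: hasse_Delta2 is_matching_def potf_def ins_eq insert_Diff_if)

lemma mD_1_8: "{g 1, g 8} \<in> morse_complex Delta2"
  by (rule morse_by_pot[where f="potf [0,2,0,1,3,5,4]"]) (simp_all add: hasse_Delta2 is_matching_def potf_def ins_eq insert_Diff_if)

lemma mD_2_8: "{g 2, g 8} \<in> morse_complex Delta2"
  by (rule morse_by_pot[where f="potf [0,2,0,3,1,5,4]"]) (simp_all add: hasse_Delta2 is_matching_def potf_def ins_eq insert_Diff_if)

lemma mD_3_8: "{g 3, g 8} \<in> morse_complex Delta2"
  by (rule morse_by_pot[where f="potf [0,0,2,1,1,3,2]"]) (simp_all add: hasse_Delta2 is_matching_def potf_def ins_eq insert_Diff_if)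

lemma mD_0_2_8: "{g 0, g 2, g 8} \<in> morse_complex Delta2"
  by (rule morse_by_pot[where f="potf [4,2,0,3,1,5,4]"]) (simp_all add: hasse_Delta2 is_matching_def potf_def ins_eq insert_Diff_if)

lemma mD_0_3_8: "{g 0, g 3, g 8} \<in> morse_complex Delta2"
  by (rule morse_by_pot[where f="potf [2,0,2,1,1,3,2]"]) (simp_all add: hasse_Delta2 is_matching_def potf_def ins_eq insert_Diff_if)

lemma mD_1_3_8: "{g 1, g 3, g 8} \<in> morse_complex Delta2"
  by (rule morse_by_pot[where f="potf [0,2,4,1,3,5,4]"]) (simp_all add: hasse_Delta2 is_matching_def potf_def ins_eq insert_Diff_if)

lemma mB_0: "{g 0} \<in> morse_complex bdDelta2"
  by (rule morse_by_pot[where f="potf [2,0,0,1,1,3,0]"]) (simp_all add: hasse_bdDelta2 is_matching_def potf_def ins_eq insert_Diff_if)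

lemma mB_1: "{g 1} \<in> morse_complex bdDelta2"
  by (rule morse_by_pot[where f="potf [0,2,0,1,3,1,0]"]) (simp_all add: hasse_bdDelta2 is_matching_def potf_def ins_eq insert_Diff_if)

lemma mB_2: "{g 2} \<in> morse_complex bdDelta2"
  by (rule morse_by_pot[where f="potf [0,2,0,3,1,1,0]"]) (simp_all add: hasse_bdDelta2 is_matching_def potf_def ins_eq insert_Diff_if)

lemma mB_3: "{g 3} \<in> morse_complex bdDelta2"
  by (rule morse_by_pot[where f="potf [0,0,2,1,1,3,0]"]) (simp_all add: hasse_bdDelta2 is_matching_def potf_def ins_eq insert_Diff_if)

lemma mB_4: "{g 4} \<in> morse_complex bdDelta2"
  by (rule morse_by_pot[where f="potf [0,0,2,1,3,1,0]"]) (simp_all add: hasse_bdDelta2 is_matching_def potf_def ins_eq insert_Diff_if)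

lemma mB_5: "{g 5} \<in> morse_complex bdDelta2"
  by (rule morse_by_pot[where f="potf [2,0,0,3,1,1,0]"]) (simp_all add: hasse_bdDelta2 is_matching_def potf_def ins_eq insert_Diff_if)

lemma mB_0_2: "{g 0, g 2} \<in> morse_complex bdDelta2"
  by (rule morse_by_pot[where f="potf [4,2,0,3,1,5,0]"]) (simp_all add: hasse_bdDelta2 is_matching_def potf_def ins_eq insert_Diff_if)

lemma mB_0_3: "{g 0, g 3} \<in> morse_complex bdDelta2"
  by (rule morse_by_pot[where f="potf [2,0,2,1,1,3,0]"]) (simp_all add: hasse_bdDelta2 is_matching_def potf_def ins_eq insert_Diff_if)

lemma mB_0_4: "{g 0, g 4} \<in> morse_complex bdDelta2"
  by (rule morse_by_pot[where f="potf [2,0,4,1,5,3,0]"]) (simp_all add: hasse_bdDelta2 is_matching_def potf_def ins_eq insert_Diff_if)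

lemma mB_1_3: "{g 1, g 3} \<in> morse_complex bdDelta2"
  by (rule morse_by_pot[where f="potf [0,2,4,1,3,5,0]"]) (simp_all add: hasse_bdDelta2 is_matching_def potf_def ins_eq insert_Diff_if)

lemma mB_1_4: "{g 1, g 4} \<in> morse_complex bdDelta2"
  by (rule morse_by_pot[where f="potf [0,2,2,1,3,1,0]"]) (simp_all add: hasse_bdDelta2 is_matching_def potf_def ins_eq insert_Diff_if)

lemma mB_1_5: "{g 1, g 5} \<in> morse_complex bdDelta2"
  by (rule morse_by_pot[where f="potf [2,4,0,3,5,1,0]"]) (simp_all add: hasse_bdDelta2 is_matching_def potf_def ins_eq insert_Diff_if)

lemma mB_2_4: "{g 2, g 4} \<in> morse_complex bdDelta2"
  by (rule morse_by_pot[where f="potf [0,4,2,5,3,1,0]"]) (simp_all add: hasse_bdDelta2 is_matching_def potf_def ins_eq insert_Diff_if)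

lemma mB_2_5: "{g 2, g 5} \<in> morse_complex bdDelta2"
  by (rule morse_by_pot[where f="potf [2,2,0,3,1,1,0]"]) (simp_all add: hasse_bdDelta2 is_matching_def potf_def ins_eq insert_Diff_if)

lemma mB_3_5: "{g 3, g 5} \<in> morse_complex bdDelta2"
  by (rule morse_by_pot[where f="potf [4,0,2,5,1,3,0]"]) (simp_all add: hasse_bdDelta2 is_matching_def potf_def ins_eq insert_Diff_if)

lemma K2_sub: "(`) g ` K2 \<subseteq> morse_complex Delta2"
  unfolding K2_def by (simp only: image_insert image_empty insert_subset empty_subsetI mD_0 mD_1 mD_2 mD_3 mD_4 mD_5 mD_0_2 mD_0_3 mD_0_4 mD_1_3 mD_1_4 mD_1_5 mD_2_4 mD_2_5 mD_3_5 mD_6 mD_2_6 mD_3_6 mD_4_6 mD_5_6 mD_2_4_6 mD_2_5_6 mD_3_5_6 mD_7 mD_0_7 mD_1_7 mD_4_7 mD_5_7 mD_0_4_7 mD_1_4_7 mD_1_5_7 mD_8 mD_0_8 mD_1_8 mD_2_8 mD_3_8 mD_0_2_8 mD_0_3_8 mD_1_3_8 simp_thms)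

lemma K1_sub: "(`) g ` K1 \<subseteq> morse_complex bdDelta2"
  unfolding K1_def by (simp only: image_insert image_empty insert_subset empty_subsetI mB_0 mB_1 mB_2 mB_3 mB_4 mB_5 mB_0_2 mB_0_3 mB_0_4 mB_1_3 mB_1_4 mB_1_5 mB_2_4 mB_2_5 mB_3_5 simp_thms)


definition CF :: "(nat \<times> nat) set" where "CF = {(0,1), (1,2), (2,3), (3,4), (4,5), (5,0), (6,0), (6,1), (7,2), (7,3), (8,4), (8,5), (6,7), (6,8), (7,8)}"
definition CF6 :: "(nat \<times> nat) set" where "CF6 = {(0,1), (1,2), (2,3), (3,4), (4,5), (5,0)}"
definition H18 :: "nat set set" where "H18 = {{}, {0}, {1}, {2}, {3}, {4}, {5}, {0,2}, {0,3}, {0,4}, {1,3}, {1,4}, {1,5}, {2,4}, {2,5}, {3,5}, {0,2,4}, {1,3,5}}"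

lemma CF6_sub: "CF6 \<subseteq> CF" unfolding CF6_def CF_def by simp

lemma CF_conf: "\<forall>(i, j)\<in>CF. g i \<noteq> g j \<and> {fst (g i), snd (g i)} \<inter> {fst (g j), snd (g j)} \<noteq> {}"
  unfolding CF_def by (simp add: ins_eq insert_Diff_if)

lemma hexenum: "\<forall>B\<in>Pow {0,1,2,3,4,5}. (\<forall>(i, j)\<in>CF6. \<not> (i \<in> B \<and> j \<in> B)) \<longrightarrow> B \<in> H18"
  unfolding CF6_def H18_def
  apply (simp only: Pow_insert Pow_empty)
  apply (simp add: ins_eq insert_Diff_if)
  done

lemma C3enum: "\<forall>C\<in>Pow {6,7,8}. \<not> (6 \<in> C \<and> 7 \<in> C) \<and> \<not> (6 \<in> C \<and> 8 \<in> C) \<and> \<not> (7 \<in> C \<and> 8 \<in> C) \<longrightarrow> C \<in> {{}, {6}, {7}, {8}}"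
  apply (simp only: Pow_insert Pow_empty)
  apply (simp add: ins_eq insert_Diff_if)
  done

lemma K2_enum: "\<forall>B\<in>H18. \<forall>C\<in>{{}, {6}, {7}, {8}}. (B \<union> C \<noteq> {} \<and> (\<forall>(i, j)\<in>CF. \<not> (i \<in> B \<union> C \<and> j \<in> B \<union> C)) \<and> \<not> {0,2,4} \<subseteq> B \<union> C \<and> \<not> {1,3,5} \<subseteq> B \<union> C) \<longrightarrow> B \<union> C \<in> K2"
  unfolding H18_def CF_def K2_def by (simp add: ins_eq insert_Diff_if)

lemma K1_enum: "\<forall>B\<in>H18. B \<noteq> {} \<and> \<not> {0,2,4} \<subseteq> B \<and> \<not> {1,3,5} \<subseteq> B \<longrightarrow> B \<in> K1"
  unfolding H18_def K1_def by (simp add: ins_eq insert_Diff_if)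

lemma cyc1:
  assumes "g 0 \<in> W" "g 2 \<in> W" "g 4 \<in> W" "g 1 \<notin> W" "g 3 \<notin> W" "g 5 \<notin> W" "{g 1, g 3, g 5} \<subseteq> H"
  shows "\<not> acyclic ((H - W) \<union> W\<inverse>)"
proof -
  let ?r = "(H - W) \<union> W\<inverse>"
  have e: "({0::nat}, {0,2}) \<in> ?r" "({0,2}, {2}) \<in> ?r" "({2}, {1,2}) \<in> ?r" "({1,2}, {1}) \<in> ?r"
    "({1}, {0,1}) \<in> ?r" "({0,1}, {0}) \<in> ?r"
    using assms by auto
  have "({0::nat}, {0}) \<in> ?r\<^sup>+"
    using e by (meson r_into_trancl trancl_into_trancl2)
  then show ?thesis unfolding acyclic_def by blast
qed

lemma cyc2:
  assumes "g 1 \<in> W" "g 3 \<in> W" "g 5 \<in> W" "g 0 \<notin> W" "g 2 \<notin> W" "g 4 \<notin> W" "{g 0, g 2, g 4} \<subseteq> H"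
  shows "\<not> acyclic ((H - W) \<union> W\<inverse>)"
proof -
  let ?r = "(H - W) \<union> W\<inverse>"
  have e: "({0::nat}, {0,1}) \<in> ?r" "({0,1}, {1}) \<in> ?r" "({1}, {1,2}) \<in> ?r" "({1,2}, {2}) \<in> ?r"
    "({2}, {0,2}) \<in> ?r" "({0,2}, {0}) \<in> ?r"
    using assms by auto
  have "({0::nat}, {0}) \<in> ?r\<^sup>+"
    using e by (meson r_into_trancl trancl_into_trancl2)
  then show ?thesis unfolding acyclic_def by blast
qed


lemma img_preimage: "W \<subseteq> g ` V \<Longrightarrow> W = g ` {i \<in> V. g i \<in> W}"
  by auto

lemma g_inj9: "inj_on g {0,1,2,3,4,5,6,7,8}"
  unfolding inj_on_def by (simp add: ins_eq insert_Diff_if)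

lemma matching_conf:
  assumes m: "is_matching W" and c: "(i, j) \<in> CF" and "g i \<in> W" "g j \<in> W"
  shows False
proof -
  have "g i \<noteq> g j" "{fst (g i), snd (g i)} \<inter> {fst (g j), snd (g j)} \<noteq> {}"
    using CF_conf c by auto
  then show False using m assms(3,4) unfolding is_matching_def by blast
qed

lemma morse_Delta2: "morse_complex Delta2 = (`) g ` K2"
proof
  show "(`) g ` K2 \<subseteq> morse_complex Delta2" by (rule K2_sub)
  show "morse_complex Delta2 \<subseteq> (`) g ` K2"
  proof
    fix W assume W: "W \<in> morse_complex Delta2"
    then have Wne: "W \<noteq> {}" and Wh: "W \<subseteq> hasse Delta2" and Wm: "is_matching W"
      and Wa: "acyclic ((hasse Delta2 - W) \<union> W\<inverse>)"
      unfolding morse_complex_def acyclic_matching_def by auto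
    define V where "V = {0,1,2,3,4,5,6,7,8::nat}"
    have HV: "hasse Delta2 = g ` V" unfolding hasse_Delta2 V_def by (simp only: image_insert image_empty)
    define A where "A = {i \<in> V. g i \<in> W}"
    have WA: "W = g ` A" using Wh HV unfolding A_def by (simp add: img_preimage)
    have injg: "inj_on g V" unfolding V_def by (rule g_inj9)
    have AV: "A \<subseteq> V" unfolding A_def by blast
    have memA: "g i \<in> W \<longleftrightarrow> i \<in> A" if "i \<in> V" for i using that unfolding A_def by blast
    have ind: "\<forall>(i, j)\<in>CF. \<not> (i \<in> A \<and> j \<in> A)"
    proof (clarify)
      fix i j assume "(i, j) \<in> CF" "i \<in> A" "j \<in> A"
      then show False using matching_conf[OF Wm] AV memA by blast
    qed
    have CFi: "(0,1) \<in> CF" "(2,3) \<in> CF" "(4,5) \<in> CF" "(1,2) \<in> CF" "(3,4) \<in> CF" "(5,0) \<in> CF"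
      unfolding CF_def by simp_all
    have V6: "0 \<in> V" "1 \<in> V" "2 \<in> V" "3 \<in> V" "4 \<in> V" "5 \<in> V" unfolding V_def by simp_all
    have np1: "\<not> {0,2,4} \<subseteq> A"
    proof
      assume "{0,2,4} \<subseteq> A"
      then have "0 \<in> A" "2 \<in> A" "4 \<in> A" by auto
      moreover have "1 \<notin> A" "3 \<notin> A" "5 \<notin> A" using ind CFi calculation by blast+
      ultimately have "g 0 \<in> W" "g 2 \<in> W" "g 4 \<in> W" "g 1 \<notin> W" "g 3 \<notin> W" "g 5 \<notin> W"
        using memA V6 by blast+
      moreover have "{g 1, g 3, g 5} \<subseteq> hasse Delta2" unfolding HV V_def by blast
      ultimately show False using cyc1 Wa by blast
    qed
    have np2: "\<not> {1,3,5} \<subseteq> A"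
    proof
      assume "{1,3,5} \<subseteq> A"
      then have "1 \<in> A" "3 \<in> A" "5 \<in> A" by auto
      moreover have "0 \<notin> A" "2 \<notin> A" "4 \<notin> A" using ind CFi calculation by blast+
      ultimately have "g 1 \<in> W" "g 3 \<in> W" "g 5 \<in> W" "g 0 \<notin> W" "g 2 \<notin> W" "g 4 \<notin> W"
        using memA V6 by blast+
      moreover have "{g 0, g 2, g 4} \<subseteq> hasse Delta2" unfolding HV V_def by blast
      ultimately show False using cyc2 Wa by blast
    qed
    define B where "B = A \<inter> {0,1,2,3,4,5}"
    define C where "C = A \<inter> {6,7,8}"
    have ABC: "A = B \<union> C" using AV unfolding B_def C_def V_def by blast
    have "B \<in> Pow {0,1,2,3,4,5}" unfolding B_def by blast
    moreover have "\<forall>(i, j)\<in>CF6. \<not> (i \<in> B \<and> j \<in> B)" using ind CF6_sub unfolding B_def by blast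
    ultimately have BH: "B \<in> H18" using hexenum by blast
    have "C \<in> Pow {6,7,8}" unfolding C_def by blast
    moreover have "(6,7) \<in> CF" "(6,8) \<in> CF" "(7,8) \<in> CF" unfolding CF_def by simp_all
    then have "\<not> (6 \<in> C \<and> 7 \<in> C) \<and> \<not> (6 \<in> C \<and> 8 \<in> C) \<and> \<not> (7 \<in> C \<and> 8 \<in> C)"
      using ind unfolding C_def by blast
    ultimately have CC: "C \<in> {{}, {6}, {7}, {8}}" using C3enum by blast
    have "B \<union> C \<noteq> {}" using Wne WA ABC by blast
    then have "B \<union> C \<in> K2" using K2_enum BH CC ind np1 np2 unfolding ABC by blast
    then show "W \<in> (`) g ` K2" using WA ABC by blast
  qed
qed

lemma morse_bdDelta2: "morse_complex bdDelta2 = (`) g ` K1"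
proof
  show "(`) g ` K1 \<subseteq> morse_complex bdDelta2" by (rule K1_sub)
  show "morse_complex bdDelta2 \<subseteq> (`) g ` K1"
  proof
    fix W assume W: "W \<in> morse_complex bdDelta2"
    then have Wne: "W \<noteq> {}" and Wh: "W \<subseteq> hasse bdDelta2" and Wm: "is_matching W"
      and Wa: "acyclic ((hasse bdDelta2 - W) \<union> W\<inverse>)"
      unfolding morse_complex_def acyclic_matching_def by auto
    define V where "V = {0,1,2,3,4,5::nat}"
    have HV: "hasse bdDelta2 = g ` V" unfolding hasse_bdDelta2 V_def by (simp only: image_insert image_empty)
    define A where "A = {i \<in> V. g i \<in> W}"
    have WA: "W = g ` A" using Wh HV unfolding A_def by (simp add: img_preimage)
    have AV: "A \<subseteq> V" unfolding A_def by blast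
    have memA: "g i \<in> W \<longleftrightarrow> i \<in> A" if "i \<in> V" for i using that unfolding A_def by blast
    have ind: "\<forall>(i, j)\<in>CF. \<not> (i \<in> A \<and> j \<in> A)"
    proof (clarify)
      fix i j assume "(i, j) \<in> CF" "i \<in> A" "j \<in> A"
      then show False using matching_conf[OF Wm] AV memA by blast
    qed
    have CFi: "(0,1) \<in> CF" "(2,3) \<in> CF" "(4,5) \<in> CF" "(1,2) \<in> CF" "(3,4) \<in> CF" "(5,0) \<in> CF"
      unfolding CF_def by simp_all
    have V6: "0 \<in> V" "1 \<in> V" "2 \<in> V" "3 \<in> V" "4 \<in> V" "5 \<in> V" unfolding V_def by simp_all
    have np1: "\<not> {0,2,4} \<subseteq> A"
    proof
      assume "{0,2,4} \<subseteq> A"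
      then have "0 \<in> A" "2 \<in> A" "4 \<in> A" by auto
      moreover have "1 \<notin> A" "3 \<notin> A" "5 \<notin> A" using ind CFi calculation by blast+
      ultimately have "g 0 \<in> W" "g 2 \<in> W" "g 4 \<in> W" "g 1 \<notin> W" "g 3 \<notin> W" "g 5 \<notin> W"
        using memA V6 by blast+
      moreover have "{g 1, g 3, g 5} \<subseteq> hasse bdDelta2" unfolding HV V_def by blast
      ultimately show False using cyc1 Wa by blast
    qed
    have np2: "\<not> {1,3,5} \<subseteq> A"
    proof
      assume "{1,3,5} \<subseteq> A"
      then have "1 \<in> A" "3 \<in> A" "5 \<in> A" by auto
      moreover have "0 \<notin> A" "2 \<notin> A" "4 \<notin> A" using ind CFi calculation by blast+
      ultimately have "g 1 \<in> W" "g 3 \<in> W" "g 5 \<in> W" "g 0 \<notin> W" "g 2 \<notin> W" "g 4 \<notin> W"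
        using memA V6 by blast+
      moreover have "{g 0, g 2, g 4} \<subseteq> hasse bdDelta2" unfolding HV V_def by blast
      ultimately show False using cyc2 Wa by blast
    qed
    have "A \<in> Pow {0,1,2,3,4,5}" using AV unfolding V_def by blast
    moreover have "\<forall>(i, j)\<in>CF6. \<not> (i \<in> A \<and> j \<in> A)" using ind CF6_sub by blast
    ultimately have AH: "A \<in> H18" using hexenum by blast
    have "A \<noteq> {}" using Wne WA by blast
    then have "A \<in> K1" using K1_enum AH np1 np2 by blast
    then show "W \<in> (`) g ` K1" using WA by blast
  qed
qed


lemma gs_collapse:
  "\<sigma> \<in> K \<Longrightarrow> \<tau> \<in> K \<Longrightarrow> finite \<sigma> \<Longrightarrow> \<sigma> \<noteq> {} \<Longrightarrow> c \<notin> \<sigma> \<Longrightarrow> \<tau> = insert c \<sigma> \<Longrightarrow>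
   \<forall>\<rho>\<in>K. \<sigma> \<subseteq> \<rho> \<longrightarrow> \<rho> \<subseteq> \<tau> \<Longrightarrow> \<forall>v\<in>\<sigma>. \<tau> - {v} \<in> K \<Longrightarrow> good_step K (K - {\<sigma>, \<tau>}) \<sigma> \<tau> c"
  by (simp add: good_step_def)

lemma gs_expand:
  assumes "\<sigma> \<notin> K" "\<tau> \<notin> K" "finite \<sigma>" "\<sigma> \<noteq> {}" "c \<notin> \<sigma>" "\<tau> = insert c \<sigma>"
    "\<forall>\<rho>\<in>K. \<sigma> \<subseteq> \<rho> \<longrightarrow> \<rho> \<subseteq> \<tau>" "\<forall>v\<in>\<sigma>. \<tau> - {v} \<in> insert \<sigma> (insert \<tau> K)"
  shows "good_step (insert \<sigma> (insert \<tau> K)) K \<sigma> \<tau> c"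
proof -
  have "\<sigma> \<noteq> \<tau>" using assms(5,6) by auto
  then have "K = insert \<sigma> (insert \<tau> K) - {\<sigma>, \<tau>}" using assms(1,2) by auto
  moreover have "\<forall>\<rho>\<in>insert \<sigma> (insert \<tau> K). \<sigma> \<subseteq> \<rho> \<longrightarrow> \<rho> \<subseteq> \<tau>" using assms(6,7) by auto
  ultimately show ?thesis using assms unfolding good_step_def by auto
qed

lemma collapses_step: "elementary_collapse A B \<Longrightarrow> collapses_to B C \<Longrightarrow> collapses_to A C"
  unfolding collapses_to_def by (rule converse_rtrancl_into_rtrancl) auto

lemma collapses_refl: "collapses_to A A"
  unfolding collapses_to_def by simp

definition D1 :: "nat set set" where "D1 = K2 - {{4,6}, {2,4,6}}"
definition D2 :: "nat set set" where "D2 = D1 - {{2,6}, {2,5,6}}"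
definition D3 :: "nat set set" where "D3 = D2 - {{5,6}, {3,5,6}}"
definition D4 :: "nat set set" where "D4 = D3 - {{6}, {3,6}}"
definition D5 :: "nat set set" where "D5 = D4 - {{0,7}, {0,4,7}}"
definition D6 :: "nat set set" where "D6 = D5 - {{4,7}, {1,4,7}}"
definition D7 :: "nat set set" where "D7 = D6 - {{1,7}, {1,5,7}}"
definition D8 :: "nat set set" where "D8 = D7 - {{7}, {5,7}}"
definition D9 :: "nat set set" where "D9 = D8 - {{2,8}, {0,2,8}}"
definition D10 :: "nat set set" where "D10 = D9 - {{0,8}, {0,3,8}}"
definition D11 :: "nat set set" where "D11 = D10 - {{3,8}, {1,3,8}}"
definition D12 :: "nat set set" where "D12 = D11 - {{8}, {1,8}}"
lemma d_step1: "good_step K2 D1 {4,6} {2,4,6} 2"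
  unfolding D1_def by (rule gs_collapse) (simp_all add: D1_def D2_def D3_def D4_def D5_def D6_def D7_def D8_def D9_def D10_def D11_def D12_def K2_def ball_Diff_eq ins_eq insert_Diff_if)
lemma d_step2: "good_step D1 D2 {2,6} {2,5,6} 5"
  unfolding D2_def by (rule gs_collapse) (simp_all add: D1_def D2_def D3_def D4_def D5_def D6_def D7_def D8_def D9_def D10_def D11_def D12_def K2_def ball_Diff_eq ins_eq insert_Diff_if)
lemma d_step3: "good_step D2 D3 {5,6} {3,5,6} 3"
  unfolding D3_def by (rule gs_collapse) (simp_all add: D1_def D2_def D3_def D4_def D5_def D6_def D7_def D8_def D9_def D10_def D11_def D12_def K2_def ball_Diff_eq ins_eq insert_Diff_if)
lemma d_step4: "good_step D3 D4 {6} {3,6} 3"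
  unfolding D4_def by (rule gs_collapse) (simp_all add: D1_def D2_def D3_def D4_def D5_def D6_def D7_def D8_def D9_def D10_def D11_def D12_def K2_def ball_Diff_eq ins_eq insert_Diff_if)
lemma d_step5: "good_step D4 D5 {0,7} {0,4,7} 4"
  unfolding D5_def by (rule gs_collapse) (simp_all add: D1_def D2_def D3_def D4_def D5_def D6_def D7_def D8_def D9_def D10_def D11_def D12_def K2_def ball_Diff_eq ins_eq insert_Diff_if)
lemma d_step6: "good_step D5 D6 {4,7} {1,4,7} 1"
  unfolding D6_def by (rule gs_collapse) (simp_all add: D1_def D2_def D3_def D4_def D5_def D6_def D7_def D8_def D9_def D10_def D11_def D12_def K2_def ball_Diff_eq ins_eq insert_Diff_if)
lemma d_step7: "good_step D6 D7 {1,7} {1,5,7} 5"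
  unfolding D7_def by (rule gs_collapse) (simp_all add: D1_def D2_def D3_def D4_def D5_def D6_def D7_def D8_def D9_def D10_def D11_def D12_def K2_def ball_Diff_eq ins_eq insert_Diff_if)
lemma d_step8: "good_step D7 D8 {7} {5,7} 5"
  unfolding D8_def by (rule gs_collapse) (simp_all add: D1_def D2_def D3_def D4_def D5_def D6_def D7_def D8_def D9_def D10_def D11_def D12_def K2_def ball_Diff_eq ins_eq insert_Diff_if)
lemma d_step9: "good_step D8 D9 {2,8} {0,2,8} 0"
  unfolding D9_def by (rule gs_collapse) (simp_all add: D1_def D2_def D3_def D4_def D5_def D6_def D7_def D8_def D9_def D10_def D11_def D12_def K2_def ball_Diff_eq ins_eq insert_Diff_if)
lemma d_step10: "good_step D9 D10 {0,8} {0,3,8} 3"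
  unfolding D10_def by (rule gs_collapse) (simp_all add: D1_def D2_def D3_def D4_def D5_def D6_def D7_def D8_def D9_def D10_def D11_def D12_def K2_def ball_Diff_eq ins_eq insert_Diff_if)
lemma d_step11: "good_step D10 D11 {3,8} {1,3,8} 1"
  unfolding D11_def by (rule gs_collapse) (simp_all add: D1_def D2_def D3_def D4_def D5_def D6_def D7_def D8_def D9_def D10_def D11_def D12_def K2_def ball_Diff_eq ins_eq insert_Diff_if)
lemma d_step12: "good_step D11 D12 {8} {1,8} 1"
  unfolding D12_def by (rule gs_collapse) (simp_all add: D1_def D2_def D3_def D4_def D5_def D6_def D7_def D8_def D9_def D10_def D11_def D12_def K2_def ball_Diff_eq ins_eq insert_Diff_if)
lemma D12_eq: "D12 = K1"
  by (simp add: D1_def D2_def D3_def D4_def D5_def D6_def D7_def D8_def D9_def D10_def D11_def D12_def K2_def K1_def ins_eq insert_Diff_if)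
lemma collapse_K2_K1: "collapses_to K2 K1"
  unfolding D12_eq[symmetric]
  by (rule collapses_step[OF good_step_elementary[OF d_step1]], rule collapses_step[OF good_step_elementary[OF d_step2]], rule collapses_step[OF good_step_elementary[OF d_step3]], rule collapses_step[OF good_step_elementary[OF d_step4]], rule collapses_step[OF good_step_elementary[OF d_step5]], rule collapses_step[OF good_step_elementary[OF d_step6]], rule collapses_step[OF good_step_elementary[OF d_step7]], rule collapses_step[OF good_step_elementary[OF d_step8]], rule collapses_step[OF good_step_elementary[OF d_step9]], rule collapses_step[OF good_step_elementary[OF d_step10]], rule collapses_step[OF good_step_elementary[OF d_step11]], rule collapses_step[OF good_step_elementary[OF d_step12]], (rule collapses_refl))
lemma hequiv_K2_K1: "realization K2 homotopy_equivalent_space realization K1"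
proof -
  have "realization K2 homotopy_equivalent_space realization D1" by (rule good_step_hequiv[OF d_step1])
  also have "realization D1 homotopy_equivalent_space realization D2" by (rule good_step_hequiv[OF d_step2])
  also have "realization D2 homotopy_equivalent_space realization D3" by (rule good_step_hequiv[OF d_step3])
  also have "realization D3 homotopy_equivalent_space realization D4" by (rule good_step_hequiv[OF d_step4])
  also have "realization D4 homotopy_equivalent_space realization D5" by (rule good_step_hequiv[OF d_step5])
  also have "realization D5 homotopy_equivalent_space realization D6" by (rule good_step_hequiv[OF d_step6])
  also have "realization D6 homotopy_equivalent_space realization D7" by (rule good_step_hequiv[OF d_step7])
  also have "realization D7 homotopy_equivalent_space realization D8" by (rule good_step_hequiv[OF d_step8])
  also have "realization D8 homotopy_equivalent_space realization D9" by (rule good_step_hequiv[OF d_step9])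
  also have "realization D9 homotopy_equivalent_space realization D10" by (rule good_step_hequiv[OF d_step10])
  also have "realization D10 homotopy_equivalent_space realization D11" by (rule good_step_hequiv[OF d_step11])
  also have "realization D11 homotopy_equivalent_space realization D12" by (rule good_step_hequiv[OF d_step12])
  finally show ?thesis unfolding D12_eq .
qed
definition E1 :: "nat set set" where "E1 = insert {0,5} (insert {0,2,5} K1)"
definition E2 :: "nat set set" where "E2 = E1 - {{2,5}, {0,2,5}}"
definition E3 :: "nat set set" where "E3 = insert {0,1} (insert {0,1,4} E2)"
definition E4 :: "nat set set" where "E4 = E3 - {{1,4}, {0,1,4}}"
definition E5 :: "nat set set" where "E5 = insert {6} (insert {5,6} E4)"
definition E6 :: "nat set set" where "E6 = insert {1,6} (insert {1,5,6} E5)"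
definition E7 :: "nat set set" where "E7 = E6 - {{1,5}, {1,5,6}}"
definition E8 :: "nat set set" where "E8 = insert {0,6} (insert {0,5,6} E7)"
definition E9 :: "nat set set" where "E9 = E8 - {{5,6}, {0,5,6}}"
definition E10 :: "nat set set" where "E10 = insert {7} (insert {3,7} E9)"
definition E11 :: "nat set set" where "E11 = insert {1,7} (insert {1,3,7} E10)"
definition E12 :: "nat set set" where "E12 = E11 - {{1,3}, {1,3,7}}"
definition E13 :: "nat set set" where "E13 = insert {0,7} (insert {0,3,7} E12)"
definition E14 :: "nat set set" where "E14 = E13 - {{3,7}, {0,3,7}}"
definition E15 :: "nat set set" where "E15 = insert {8} (insert {0,8} E14)"
definition E16 :: "nat set set" where "E16 = insert {1,8} (insert {0,1,8} E15)"
definition E17 :: "nat set set" where "E17 = E16 - {{0,1}, {0,1,8}}"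
definition E18 :: "nat set set" where "E18 = insert {7,8} (insert {1,7,8} E17)"
definition E19 :: "nat set set" where "E19 = E18 - {{1,8}, {1,7,8}}"
definition E20 :: "nat set set" where "E20 = insert {0,1} (insert {0,1,7} E19)"
definition E21 :: "nat set set" where "E21 = E20 - {{1,7}, {0,1,7}}"
lemma e_step1: "good_step E1 K1 {0,5} {0,2,5} 2"
  unfolding E1_def by (rule gs_expand) (simp_all add: E1_def E2_def E3_def E4_def E5_def E6_def E7_def E8_def E9_def E10_def E11_def E12_def E13_def E14_def E15_def E16_def E17_def E18_def E19_def E20_def E21_def K1_def ball_Diff_eq ins_eq insert_Diff_if)
lemma e_step2: "good_step E1 E2 {2,5} {0,2,5} 0"
  unfolding E2_def by (rule gs_collapse) (simp_all add: E1_def E2_def E3_def E4_def E5_def E6_def E7_def E8_def E9_def E10_def E11_def E12_def E13_def E14_def E15_def E16_def E17_def E18_def E19_def E20_def E21_def K1_def ball_Diff_eq ins_eq insert_Diff_if)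
lemma e_step3: "good_step E3 E2 {0,1} {0,1,4} 4"
  unfolding E3_def by (rule gs_expand) (simp_all add: E1_def E2_def E3_def E4_def E5_def E6_def E7_def E8_def E9_def E10_def E11_def E12_def E13_def E14_def E15_def E16_def E17_def E18_def E19_def E20_def E21_def K1_def ball_Diff_eq ins_eq insert_Diff_if)
lemma e_step4: "good_step E3 E4 {1,4} {0,1,4} 0"
  unfolding E4_def by (rule gs_collapse) (simp_all add: E1_def E2_def E3_def E4_def E5_def E6_def E7_def E8_def E9_def E10_def E11_def E12_def E13_def E14_def E15_def E16_def E17_def E18_def E19_def E20_def E21_def K1_def ball_Diff_eq ins_eq insert_Diff_if)
lemma e_step5: "good_step E5 E4 {6} {5,6} 5"
  unfolding E5_def by (rule gs_expand) (simp_all add: E1_def E2_def E3_def E4_def E5_def E6_def E7_def E8_def E9_def E10_def E11_def E12_def E13_def E14_def E15_def E16_def E17_def E18_def E19_def E20_def E21_def K1_def ball_Diff_eq ins_eq insert_Diff_if)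
lemma e_step6: "good_step E6 E5 {1,6} {1,5,6} 5"
  unfolding E6_def by (rule gs_expand) (simp_all add: E1_def E2_def E3_def E4_def E5_def E6_def E7_def E8_def E9_def E10_def E11_def E12_def E13_def E14_def E15_def E16_def E17_def E18_def E19_def E20_def E21_def K1_def ball_Diff_eq ins_eq insert_Diff_if)
lemma e_step7: "good_step E6 E7 {1,5} {1,5,6} 6"
  unfolding E7_def by (rule gs_collapse) (simp_all add: E1_def E2_def E3_def E4_def E5_def E6_def E7_def E8_def E9_def E10_def E11_def E12_def E13_def E14_def E15_def E16_def E17_def E18_def E19_def E20_def E21_def K1_def ball_Diff_eq ins_eq insert_Diff_if)
lemma e_step8: "good_step E8 E7 {0,6} {0,5,6} 5"
  unfolding E8_def by (rule gs_expand) (simp_all add: E1_def E2_def E3_def E4_def E5_def E6_def E7_def E8_def E9_def E10_def E11_def E12_def E13_def E14_def E15_def E16_def E17_def E18_def E19_def E20_def E21_def K1_def ball_Diff_eq ins_eq insert_Diff_if)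
lemma e_step9: "good_step E8 E9 {5,6} {0,5,6} 0"
  unfolding E9_def by (rule gs_collapse) (simp_all add: E1_def E2_def E3_def E4_def E5_def E6_def E7_def E8_def E9_def E10_def E11_def E12_def E13_def E14_def E15_def E16_def E17_def E18_def E19_def E20_def E21_def K1_def ball_Diff_eq ins_eq insert_Diff_if)
lemma e_step10: "good_step E10 E9 {7} {3,7} 3"
  unfolding E10_def by (rule gs_expand) (simp_all add: E1_def E2_def E3_def E4_def E5_def E6_def E7_def E8_def E9_def E10_def E11_def E12_def E13_def E14_def E15_def E16_def E17_def E18_def E19_def E20_def E21_def K1_def ball_Diff_eq ins_eq insert_Diff_if)
lemma e_step11: "good_step E11 E10 {1,7} {1,3,7} 3"
  unfolding E11_def by (rule gs_expand) (simp_all add: E1_def E2_def E3_def E4_def E5_def E6_def E7_def E8_def E9_def E10_def E11_def E12_def E13_def E14_def E15_def E16_def E17_def E18_def E19_def E20_def E21_def K1_def ball_Diff_eq ins_eq insert_Diff_if)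
lemma e_step12: "good_step E11 E12 {1,3} {1,3,7} 7"
  unfolding E12_def by (rule gs_collapse) (simp_all add: E1_def E2_def E3_def E4_def E5_def E6_def E7_def E8_def E9_def E10_def E11_def E12_def E13_def E14_def E15_def E16_def E17_def E18_def E19_def E20_def E21_def K1_def ball_Diff_eq ins_eq insert_Diff_if)
lemma e_step13: "good_step E13 E12 {0,7} {0,3,7} 3"
  unfolding E13_def by (rule gs_expand) (simp_all add: E1_def E2_def E3_def E4_def E5_def E6_def E7_def E8_def E9_def E10_def E11_def E12_def E13_def E14_def E15_def E16_def E17_def E18_def E19_def E20_def E21_def K1_def ball_Diff_eq ins_eq insert_Diff_if)
lemma e_step14: "good_step E13 E14 {3,7} {0,3,7} 0"
  unfolding E14_def by (rule gs_collapse) (simp_all add: E1_def E2_def E3_def E4_def E5_def E6_def E7_def E8_def E9_def E10_def E11_def E12_def E13_def E14_def E15_def E16_def E17_def E18_def E19_def E20_def E21_def K1_def ball_Diff_eq ins_eq insert_Diff_if)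
lemma e_step15: "good_step E15 E14 {8} {0,8} 0"
  unfolding E15_def by (rule gs_expand) (simp_all add: E1_def E2_def E3_def E4_def E5_def E6_def E7_def E8_def E9_def E10_def E11_def E12_def E13_def E14_def E15_def E16_def E17_def E18_def E19_def E20_def E21_def K1_def ball_Diff_eq ins_eq insert_Diff_if)
lemma e_step16: "good_step E16 E15 {1,8} {0,1,8} 0"
  unfolding E16_def by (rule gs_expand) (simp_all add: E1_def E2_def E3_def E4_def E5_def E6_def E7_def E8_def E9_def E10_def E11_def E12_def E13_def E14_def E15_def E16_def E17_def E18_def E19_def E20_def E21_def K1_def ball_Diff_eq ins_eq insert_Diff_if)
lemma e_step17: "good_step E16 E17 {0,1} {0,1,8} 8"
  unfolding E17_def by (rule gs_collapse) (simp_all add: E1_def E2_def E3_def E4_def E5_def E6_def E7_def E8_def E9_def E10_def E11_def E12_def E13_def E14_def E15_def E16_def E17_def E18_def E19_def E20_def E21_def K1_def ball_Diff_eq ins_eq insert_Diff_if)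
lemma e_step18: "good_step E18 E17 {7,8} {1,7,8} 1"
  unfolding E18_def by (rule gs_expand) (simp_all add: E1_def E2_def E3_def E4_def E5_def E6_def E7_def E8_def E9_def E10_def E11_def E12_def E13_def E14_def E15_def E16_def E17_def E18_def E19_def E20_def E21_def K1_def ball_Diff_eq ins_eq insert_Diff_if)
lemma e_step19: "good_step E18 E19 {1,8} {1,7,8} 7"
  unfolding E19_def by (rule gs_collapse) (simp_all add: E1_def E2_def E3_def E4_def E5_def E6_def E7_def E8_def E9_def E10_def E11_def E12_def E13_def E14_def E15_def E16_def E17_def E18_def E19_def E20_def E21_def K1_def ball_Diff_eq ins_eq insert_Diff_if)
lemma e_step20: "good_step E20 E19 {0,1} {0,1,7} 7"
  unfolding E20_def by (rule gs_expand) (simp_all add: E1_def E2_def E3_def E4_def E5_def E6_def E7_def E8_def E9_def E10_def E11_def E12_def E13_def E14_def E15_def E16_def E17_def E18_def E19_def E20_def E21_def K1_def ball_Diff_eq ins_eq insert_Diff_if)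
lemma e_step21: "good_step E20 E21 {1,7} {0,1,7} 0"
  unfolding E21_def by (rule gs_collapse) (simp_all add: E1_def E2_def E3_def E4_def E5_def E6_def E7_def E8_def E9_def E10_def E11_def E12_def E13_def E14_def E15_def E16_def E17_def E18_def E19_def E20_def E21_def K1_def ball_Diff_eq ins_eq insert_Diff_if)
lemma hequiv_K1_E21: "realization K1 homotopy_equivalent_space realization E21"
proof -
  have "realization K1 homotopy_equivalent_space realization E1" by (subst homotopy_equivalent_space_sym) (rule good_step_hequiv[OF e_step1])
  also have "realization E1 homotopy_equivalent_space realization E2" by (rule good_step_hequiv[OF e_step2])
  also have "realization E2 homotopy_equivalent_space realization E3" by (subst homotopy_equivalent_space_sym) (rule good_step_hequiv[OF e_step3])
  also have "realization E3 homotopy_equivalent_space realization E4" by (rule good_step_hequiv[OF e_step4])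
  also have "realization E4 homotopy_equivalent_space realization E5" by (subst homotopy_equivalent_space_sym) (rule good_step_hequiv[OF e_step5])
  also have "realization E5 homotopy_equivalent_space realization E6" by (subst homotopy_equivalent_space_sym) (rule good_step_hequiv[OF e_step6])
  also have "realization E6 homotopy_equivalent_space realization E7" by (rule good_step_hequiv[OF e_step7])
  also have "realization E7 homotopy_equivalent_space realization E8" by (subst homotopy_equivalent_space_sym) (rule good_step_hequiv[OF e_step8])
  also have "realization E8 homotopy_equivalent_space realization E9" by (rule good_step_hequiv[OF e_step9])
  also have "realization E9 homotopy_equivalent_space realization E10" by (subst homotopy_equivalent_space_sym) (rule good_step_hequiv[OF e_step10])
  also have "realization E10 homotopy_equivalent_space realization E11" by (subst homotopy_equivalent_space_sym) (rule good_step_hequiv[OF e_step11])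
  also have "realization E11 homotopy_equivalent_space realization E12" by (rule good_step_hequiv[OF e_step12])
  also have "realization E12 homotopy_equivalent_space realization E13" by (subst homotopy_equivalent_space_sym) (rule good_step_hequiv[OF e_step13])
  also have "realization E13 homotopy_equivalent_space realization E14" by (rule good_step_hequiv[OF e_step14])
  also have "realization E14 homotopy_equivalent_space realization E15" by (subst homotopy_equivalent_space_sym) (rule good_step_hequiv[OF e_step15])
  also have "realization E15 homotopy_equivalent_space realization E16" by (subst homotopy_equivalent_space_sym) (rule good_step_hequiv[OF e_step16])
  also have "realization E16 homotopy_equivalent_space realization E17" by (rule good_step_hequiv[OF e_step17])
  also have "realization E17 homotopy_equivalent_space realization E18" by (subst homotopy_equivalent_space_sym) (rule good_step_hequiv[OF e_step18])
  also have "realization E18 homotopy_equivalent_space realization E19" by (rule good_step_hequiv[OF e_step19])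
  also have "realization E19 homotopy_equivalent_space realization E20" by (subst homotopy_equivalent_space_sym) (rule good_step_hequiv[OF e_step20])
  also have "realization E20 homotopy_equivalent_space realization E21" by (rule good_step_hequiv[OF e_step21])
  finally show ?thesis .
qed
definition PZ :: "nat \<Rightarrow> nat" where "PZ k = (if k = 1 then 2 else if k = 2 then 3 else if k = 3 then 6 else 7)"
definition QZ :: "nat \<Rightarrow> nat" where "QZ k = (if k = 1 then 4 else if k = 2 then 5 else if k = 3 then 1 else 8)"

lemma atLeastAtMost_1_4: "{1..4::nat} = {1,2,3,4}" by auto

lemma E21_eq: "E21 = Zc PZ QZ"
  unfolding Zc_def atLeastAtMost_1_4
  by (simp add: E1_def E2_def E3_def E4_def E5_def E6_def E7_def E8_def E9_def E10_def E11_def E12_def E13_def E14_def E15_def E16_def E17_def E18_def E19_def E20_def E21_def K1_def PZ_def QZ_def ins_eq insert_Diff_if)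

lemma wedgeZ_PQ: "wedgeZ PZ QZ"
  by unfold_locales (auto simp: PZ_def QZ_def)


definition pp :: "nat \<Rightarrow> nat \<times> bool" where
  "pp i = (if i = 0 then (0, False) else if i = 1 then (2, True) else if i = 2 then (1, False)
     else if i = 3 then (0, True) else if i = 4 then (2, False) else (1, True))"

lemma pp_simps [simp]: "pp 0 = (0, False)" "pp 1 = (2, True)" "pp (Suc 0) = (2, True)" "pp 2 = (1, False)"
  "pp 3 = (0, True)" "pp 4 = (2, False)" "pp 5 = (1, True)"
  by (simp_all add: pp_def)

lemma UK1: "\<Union>K1 = {0,1,2,3,4,5}" unfolding K1_def by (simp add: ins_eq insert_Diff_if)
lemma UK2: "\<Union>K2 = {0,1,2,3,4,5,6,7,8}" unfolding K2_def by (simp add: ins_eq insert_Diff_if)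

lemma g_inj_K1: "inj_on g (\<Union>K1)" unfolding UK1 by (rule inj_on_subset[OF g_inj9]) auto
lemma g_inj_K2: "inj_on g (\<Union>K2)" unfolding UK2 by (rule g_inj9)
lemma pp_inj_K1: "inj_on pp (\<Union>K1)" unfolding UK1 inj_on_def by simp

lemma prism_g1: "{{(i, b)} | i b. i \<in> I} = (\<Union>i\<in>I. {{(i, False)}, {(i, True)}})"
  by auto
lemma prism_g2: "{{(i, b), (j, b)} | i j b. i \<in> I \<and> j \<in> I \<and> i \<noteq> j} =
   (\<Union>i\<in>I. \<Union>j\<in>I - {i}. {{(i, False), (j, False)}, {(i, True), (j, True)}})"
  by auto
lemma prism_g3: "{{(i, False), (i, True)} | i. i \<in> I} = (\<lambda>i. {(i, False), (i, True)}) ` I"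
  by auto

lemma prism_eq: "prism_graph = (`) pp ` K1"
proof -
  have "prism_graph = {{(0,False)},{(0,True)},{(1,False)},{(1,True)},{(2,False)},{(2,True)},
    {(0,False),(1,False)},{(0,False),(2,False)},{(1,False),(2,False)},{(0,True),(1,True)},{(0,True),(2,True)},{(1,True),(2,True)},
    {(0,False),(0,True)},{(1,False),(1,True)},{(2,False),(2,True)}}"
    unfolding prism_graph_def prism_g1 prism_g2 prism_g3
    by (simp add: ins_eq insert_Diff_if)
  also have "\<dots> = (`) pp ` K1"
    unfolding K1_def by (simp add: ins_eq insert_Diff_if)
  finally show ?thesis .
qed

lemma K1_sub_K2: "K1 \<subseteq> K2" unfolding K1_def K2_def by (simp add: ins_eq insert_Diff_if)

lemma card_K1_2: "card {A \<in> K1. card A = 2} = 9"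
  unfolding K1_def by (simp only: filter_Collect_insert filter_Collect_empty) (simp add: ins_eq insert_Diff_if)

lemma wedge_hequiv: "realization K1 homotopy_equivalent_space wedge_circles 4"
proof -
  have "realization K1 homotopy_equivalent_space realization E21" by (rule hequiv_K1_E21)
  also have "realization E21 homotopy_equivalent_space wedge_circles 4"
    unfolding E21_eq
    by (rule homeomorphic_imp_homotopy_equivalent_space[OF wedgeZ.wedge_homeo[OF wedgeZ_PQ]])
  finally show ?thesis .
qed

theorem mainTheorem9:
  shows "simp_iso (morse_complex bdDelta2) prism_graph
       \<and> card (vertices (morse_complex bdDelta2)) = 6
       \<and> card {W \<in> morse_complex bdDelta2. card W = 2} = 9
       \<and> realization (morse_complex bdDelta2) homotopy_equivalent_space wedge_circles 4
       \<and> morse_complex bdDelta2 \<subseteq> morse_complex Delta2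
       \<and> collapses_to (morse_complex Delta2) (morse_complex bdDelta2)
       \<and> realization (morse_complex Delta2) homotopy_equivalent_space wedge_circles 4"
proof (intro conjI)
  show "simp_iso (morse_complex bdDelta2) prism_graph"
    unfolding morse_bdDelta2 prism_eq by (rule simp_iso_relabel[OF g_inj_K1 pp_inj_K1])
  have vK1: "vertices ((`) g ` K1) = g ` {0,1,2,3,4,5}"
    unfolding vertices_def UK1[symmetric] by auto
  show "card (vertices (morse_complex bdDelta2)) = 6"
    unfolding morse_bdDelta2 vK1 using g_inj_K1 unfolding UK1 by (simp add: card_image)
  have e: "{W \<in> (`) g ` K1. card W = 2} = (`) g ` {A \<in> K1. card A = 2}"
  proof -
    have "card (g ` A) = card A" if "A \<in> K1" for A
      using that g_inj_K1 by (intro card_image) (auto intro: inj_on_subset)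
    then show ?thesis by auto
  qed
  have "inj_on ((`) g) {A \<in> K1. card A = 2}"
    using g_inj_K1 by (auto intro!: inj_onI dest: inj_on_image_eq_iff[THEN iffD1, rotated -1])
  then show "card {W \<in> morse_complex bdDelta2. card W = 2} = 9"
    unfolding morse_bdDelta2 e by (simp add: card_image card_K1_2)
  have hK1: "realization (morse_complex bdDelta2) homotopy_equivalent_space realization K1"
    unfolding morse_bdDelta2 by (rule homeomorphic_imp_homotopy_equivalent_space[OF relabel_homeo[OF g_inj_K1 order_refl]])
  show "realization (morse_complex bdDelta2) homotopy_equivalent_space wedge_circles 4"
    using homotopy_eqv_trans[OF hK1 wedge_hequiv] .
  show "morse_complex bdDelta2 \<subseteq> morse_complex Delta2"
    unfolding morse_bdDelta2 morse_Delta2 using K1_sub_K2 by blast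
  show "collapses_to (morse_complex Delta2) (morse_complex bdDelta2)"
    unfolding morse_bdDelta2 morse_Delta2 by (rule collapses_relabel[OF collapse_K2_K1 g_inj_K2])
  have hK2: "realization (morse_complex Delta2) homotopy_equivalent_space realization K2"
    unfolding morse_Delta2 by (rule homeomorphic_imp_homotopy_equivalent_space[OF relabel_homeo[OF g_inj_K2 order_refl]])
  show "realization (morse_complex Delta2) homotopy_equivalent_space wedge_circles 4"
    using homotopy_eqv_trans[OF homotopy_eqv_trans[OF hK2 hequiv_K2_K1] wedge_hequiv] .
qed


end
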